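(* Let $G$ be a residually finite group and let $(\Gamma_n)_{n\in\mathbb{N}}$ be a decreasing sequence of finite index normal subgroups of $G$ with $\bigcap_n\Gamma_n=\{1_G\}$. Let $\overleftarrow{G}$ be the $G$-odometer associated to $(\Gamma_n)$. Then there exists a free regular Toeplitz $G$-subshift $X\subseteq\{0,1\}^G$ which is an almost one-to-one extension of $\overleftarrow{G}$.
   Context: Shift: $\sigma^gx(h)=x(g^{-1}h)$. $\mathrm{Per}(x,\Gamma,\alpha)=\{g: x(\gamma g)=\alpha\ \forall\gamma\in\Gamma\}$, $\mathrm{Per}(x,\Gamma)=\bigcup_\alpha\mathrm{Per}(x,\Gamma,\alpha)$. $\eta$ is a Toeplitz array if each $g\in G$ lies in $\mathrm{Per}(\eta,\Gamma)$ for some finite index $\Gamma$; a Toeplitz subshift is the orbit closure of a Toeplitz array. It is free if $\sigma^gx=x$ implies $g=1_G$, and regular if it carries a $\sigma$-invariant Borel probability measure giving full measure to the set of its elements that are Toeplitz arrays. The $G$-odometer of $(\Gamma_n)$ is $\{(x_n)\in\prod_nG/\Gamma_n: x_{n+1}\mapsto x_n$ under canonical projections$\}$ with coordinatewise left multiplication. An almost one-to-one extension of a minimal system $Y$ is a system $X$ with a factor map $X\to Y$ such that some point of $Y$ has exactly one preimage. *)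

theory Defs
  imports "HOL-Analysis.Analysis" "HOL-Probability.Probability"
begin

text \<open>The group G is the ambient type 'g of class group_add (written additively:
  + is the group operation, 0 the unit, uminus the inverse; not assumed commutative).
  Configurations in {0,1}^G are functions 'g \<Rightarrow> bool, with the product topology
  (the library's function-space topology over the discrete space bool).\<close>

definition subgrp :: "'g::group_add set \<Rightarrow> bool" where
  "subgrp H \<longleftrightarrow> 0 \<in> H \<and> (\<forall>a\<in>H. \<forall>b\<in>H. a + b \<in> H) \<and> (\<forall>a\<in>H. - a \<in> H)"

definition normal_subgrp :: "'g::group_add set \<Rightarrow> bool" where
  "normal_subgrp H \<longleftrightarrow> subgrp H \<and> (\<forall>g. \<forall>h\<in>H. g + h + - g \<in> H)"

definition lcoset :: "'g::group_add \<Rightarrow> 'g set \<Rightarrow> 'g set" where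
  "lcoset g H = (\<lambda>h. g + h) ` H"

definition cosets :: "'g::group_add set \<Rightarrow> 'g set set" where
  "cosets H = range (\<lambda>g. lcoset g H)"

definition finite_index :: "'g::group_add set \<Rightarrow> bool" where
  "finite_index H \<longleftrightarrow> subgrp H \<and> finite (cosets H)"

definition residually_finite :: "'g::group_add itself \<Rightarrow> bool" where
  "residually_finite _ \<longleftrightarrow>
     (\<forall>g::'g. g \<noteq> 0 \<longrightarrow> (\<exists>H. normal_subgrp H \<and> finite_index H \<and> g \<notin> H))"

definition shift :: "'g::group_add \<Rightarrow> ('g \<Rightarrow> 'a) \<Rightarrow> ('g \<Rightarrow> 'a)" where
  "shift g x = (\<lambda>h. x (- g + h))"

definition Per_val :: "('g::group_add \<Rightarrow> 'a) \<Rightarrow> 'g set \<Rightarrow> 'a \<Rightarrow> 'g set" where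
  "Per_val x \<Gamma> \<alpha> = {g. \<forall>\<gamma>\<in>\<Gamma>. x (\<gamma> + g) = \<alpha>}"

definition Per :: "('g::group_add \<Rightarrow> 'a) \<Rightarrow> 'g set \<Rightarrow> 'g set" where
  "Per x \<Gamma> = (\<Union>\<alpha>. Per_val x \<Gamma> \<alpha>)"

definition toeplitz_array :: "('g::group_add \<Rightarrow> 'a) \<Rightarrow> bool" where
  "toeplitz_array \<eta> \<longleftrightarrow> (\<forall>g. \<exists>\<Gamma>. finite_index \<Gamma> \<and> g \<in> Per \<eta> \<Gamma>)"

definition orbit_closure :: "('g::group_add \<Rightarrow> 'a::topological_space) \<Rightarrow> ('g \<Rightarrow> 'a) set" where
  "orbit_closure x = closure (range (\<lambda>g. shift g x))"

definition toeplitz_subshift :: "('g::group_add \<Rightarrow> 'a::topological_space) set \<Rightarrow> bool" where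
  "toeplitz_subshift X \<longleftrightarrow> (\<exists>\<eta>. toeplitz_array \<eta> \<and> X = orbit_closure \<eta>)"

definition free_shift :: "('g::group_add \<Rightarrow> 'a) set \<Rightarrow> bool" where
  "free_shift X \<longleftrightarrow> (\<forall>x\<in>X. \<forall>g. shift g x = x \<longrightarrow> g = 0)"

definition regular_shift :: "('g::group_add \<Rightarrow> 'a::topological_space) set \<Rightarrow> bool" where
  "regular_shift X \<longleftrightarrow>
     (\<exists>M. prob_space M \<and> sets M = sets (restrict_space borel X) \<and>
          (\<forall>g. \<forall>A\<in>sets M. emeasure M ((shift g -` A) \<inter> X) = emeasure M A) \<and>
          (AE x in M. toeplitz_array x))"

definition odometer :: "(nat \<Rightarrow> 'g::group_add set) \<Rightarrow> (nat \<Rightarrow> 'g set) set" where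
  "odometer \<Gamma> = {x. (\<forall>n. x n \<in> cosets (\<Gamma> n)) \<and>
      (\<forall>n g. x (Suc n) = lcoset g (\<Gamma> (Suc n)) \<longrightarrow> x n = lcoset g (\<Gamma> n))}"

definition odometer_act :: "'g::group_add \<Rightarrow> (nat \<Rightarrow> 'g set) \<Rightarrow> (nat \<Rightarrow> 'g set)" where
  "odometer_act g x = (\<lambda>n. (\<lambda>h. g + h) ` x n)"

definition odometer_top :: "(nat \<Rightarrow> 'g::group_add set) \<Rightarrow> (nat \<Rightarrow> 'g set) topology" where
  "odometer_top \<Gamma> = subtopology (product_topology (\<lambda>n. discrete_topology (cosets (\<Gamma> n))) UNIV)
                                  (odometer \<Gamma>)"

definition almost_1_1_ext_odometer ::
  "('g::group_add \<Rightarrow> 'a::topological_space) set \<Rightarrow> (nat \<Rightarrow> 'g set) \<Rightarrow> bool" where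
  "almost_1_1_ext_odometer X \<Gamma> \<longleftrightarrow>
     (\<exists>\<pi>. continuous_map (top_of_set X) (odometer_top \<Gamma>) \<pi> \<and>
          \<pi> ` X = odometer \<Gamma> \<and>
          (\<forall>g. \<forall>x\<in>X. \<pi> (shift g x) = odometer_act g (\<pi> x)) \<and>
          (\<exists>y\<in>odometer \<Gamma>. \<exists>!x. x \<in> X \<and> \<pi> x = y))"

end

theory Submission
  imports Defs
begin

lemma subgrpD: assumes "subgrp H" shows "0 \<in> H" "a \<in> H \<Longrightarrow> b \<in> H \<Longrightarrow> a + b \<in> H" "a \<in> H \<Longrightarrow> - a \<in> H"
  using assms unfolding subgrp_def by auto

lemma subgrp_minus_iff: assumes "subgrp H" shows "- a \<in> H \<longleftrightarrow> a \<in> H"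
proof
  assume "- a \<in> H" then have "- (- a) \<in> H" using subgrpD(3)[OF assms] by blast
  thus "a \<in> H" by simp
qed (rule subgrpD(3)[OF assms])

lemma mem_lcoset: "x \<in> lcoset a H \<longleftrightarrow> - a + x \<in> H"
proof
  assume "x \<in> lcoset a H" then obtain h where "h \<in> H" "x = a + h" unfolding lcoset_def by auto
  thus "- a + x \<in> H" by (simp add: add.assoc[symmetric])
next
  assume "- a + x \<in> H" moreover have "x = a + (- a + x)" by (simp add: add.assoc[symmetric])
  ultimately show "x \<in> lcoset a H" unfolding lcoset_def by blast
qed

lemma lcoset_eq_iff: assumes "subgrp H" shows "lcoset a H = lcoset b H \<longleftrightarrow> - a + b \<in> H"
proof
  assume "lcoset a H = lcoset b H"
  then have "b \<in> lcoset a H" using subgrpD(1)[OF assms] by (simp add: mem_lcoset)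
  thus "- a + b \<in> H" by (simp add: mem_lcoset)
next
  assume h: "- a + b \<in> H"
  show "lcoset a H = lcoset b H"
  proof (intro set_eqI iffI)
    fix x assume "x \<in> lcoset a H"
    hence "- a + x \<in> H" by (simp add: mem_lcoset)
    moreover have "- b + a \<in> H" using subgrpD(3)[OF assms h] by (simp add: minus_add)
    ultimately have "(- b + a) + (- a + x) \<in> H" using subgrpD(2)[OF assms] by blast
    thus "x \<in> lcoset b H" by (simp add: mem_lcoset add.assoc)
  next
    fix x assume "x \<in> lcoset b H"
    hence "- b + x \<in> H" by (simp add: mem_lcoset)
    hence "(- a + b) + (- b + x) \<in> H" using subgrpD(2)[OF assms] h by blast
    thus "x \<in> lcoset a H" by (simp add: mem_lcoset add.assoc)
  qed
qed

lemma lcoset_self: "subgrp H \<Longrightarrow> a \<in> lcoset a H"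
  by (simp add: mem_lcoset subgrpD)

lemma lcoset_eq_iff_mem: assumes "subgrp H" shows "lcoset a H = lcoset b H \<longleftrightarrow> b \<in> lcoset a H"
  by (simp add: lcoset_eq_iff[OF assms] mem_lcoset)

lemma lcoset_disj: assumes "subgrp H" "lcoset a H \<noteq> lcoset b H" "x \<in> lcoset a H" shows "x \<notin> lcoset b H"
proof
  assume "x \<in> lcoset b H"
  hence "lcoset b H = lcoset x H" "lcoset a H = lcoset x H" using assms lcoset_eq_iff_mem by blast+
  thus False using assms(2) by simp
qed

lemma lcoset_mono: "H \<subseteq> K \<Longrightarrow> lcoset a H \<subseteq> lcoset a K"
  unfolding lcoset_def by auto

lemma image_lcoset: "(\<lambda>h. g + h) ` lcoset a H = lcoset (g + a) H"
  unfolding lcoset_def image_image by (simp add: add.assoc)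

lemma mem_cosets: "c \<in> cosets H \<longleftrightarrow> (\<exists>a. c = lcoset a H)"
  unfolding cosets_def by auto

lemma normal_conj: assumes "normal_subgrp H" "\<gamma> \<in> H" shows "- a + \<gamma> + a \<in> H"
proof -
  have "(- a) + \<gamma> + - (- a) \<in> H" using assms unfolding normal_subgrp_def by blast
  thus ?thesis by simp
qed

lemma normal_lcoset_left: assumes "normal_subgrp H" "\<gamma> \<in> H"
  shows "\<gamma> + h \<in> lcoset a H \<longleftrightarrow> h \<in> lcoset a H"
proof -
  have sg: "subgrp H" using assms normal_subgrp_def by blast
  have c: "- a + \<gamma> + a \<in> H" using normal_conj[OF assms] .
  have "- a + (\<gamma> + h) = (- a + \<gamma> + a) + (- a + h)" by (simp only: add.assoc add_minus_cancel)
  moreover have "- a + h = - (- a + \<gamma> + a) + (- a + (\<gamma> + h))"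
    by (simp only: minus_add minus_minus add.assoc add_minus_cancel minus_add_cancel)
  show ?thesis unfolding mem_lcoset
  proof
    assume "- a + (\<gamma> + h) \<in> H"
    hence "- (- a + \<gamma> + a) + (- a + (\<gamma> + h)) \<in> H" using subgrpD[OF sg] c by blast
    thus "- a + h \<in> H" using \<open>- a + h = _\<close> by simp
  next
    assume "- a + h \<in> H"
    hence "(- a + \<gamma> + a) + (- a + h) \<in> H" using subgrpD[OF sg] c by blast
    thus "- a + (\<gamma> + h) \<in> H" using \<open>- a + (\<gamma> + h) = _\<close> by simp
  qed
qed

lemma lcoset_shift_mem: "h \<in> lcoset (g + a) H \<longleftrightarrow> - g + h \<in> lcoset a H"
proof -
  have "- (g + a) + h = - a + (- g + h)" by (simp only: minus_add add.assoc)
  thus ?thesis by (simp only: mem_lcoset)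
qed

lemma finite_index_finite_cosets: "finite_index H \<Longrightarrow> finite (cosets H)"
  by (simp add: finite_index_def)

lemma cosets_nonempty: "lcoset a H \<in> cosets H"
  unfolding mem_cosets by blast

lemma Least_cong_upto:
  fixes P Q :: "nat \<Rightarrow> bool"
  assumes "\<And>k. k \<le> m \<Longrightarrow> P k = Q k" "P m"
  shows "(LEAST k. P k) = (LEAST k. Q k)"
proof -
  have l1: "(LEAST k. P k) \<le> m" using assms(2) Least_le by blast
  have qm: "Q m" using assms by auto
  have l2: "(LEAST k. Q k) \<le> m" using qm Least_le by blast
  have "P (LEAST k. P k)" using assms(2) by (rule LeastI)
  hence "Q (LEAST k. P k)" using assms(1) l1 by auto
  hence a: "(LEAST k. Q k) \<le> (LEAST k. P k)" by (rule Least_le)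
  have "Q (LEAST k. Q k)" using qm by (rule LeastI)
  hence "P (LEAST k. Q k)" using assms(1) l2 by auto
  hence "(LEAST k. P k) \<le> (LEAST k. Q k)" by (rule Least_le)
  with a show ?thesis by simp
qed

lemma open_window: "finite F \<Longrightarrow> open {f::'g\<Rightarrow>bool. \<forall>i\<in>F. f i = x i}"
proof -
  assume F: "finite F"
  have "open {x i :: bool}" for i by (rule discrete_topology_class.open_discrete)
  thus ?thesis using product_topology_basis'[where I=F and x=id and U="\<lambda>i. {x i}"] F by simp
qed

lemma compact_UNIV_fun: "compact (UNIV :: ('g \<Rightarrow> bool) set)"
proof -
  have "compact_space (euclidean :: bool topology)"
    by (simp add: compact_space_def compactin_euclidean_iff finite_imp_compact)
  hence "compact_space (product_topology (\<lambda>_::'g. euclidean :: bool topology) UNIV)"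
    using compact_space_product_topology by blast
  thus ?thesis by (simp add: euclidean_product_topology compact_space_def compactin_euclidean_iff)
qed

lemma open_contains_window:
  fixes T :: "('g \<Rightarrow> bool) set"
  assumes "open T" "x \<in> T"
  shows "\<exists>F. finite F \<and> {f. \<forall>i\<in>F. f i = x i} \<subseteq> T"
proof -
  have "openin (product_topology (\<lambda>i. euclidean) UNIV) T" using assms(1) by (simp add: open_fun_def)
  hence H: "\<forall>x\<in>T. \<exists>U. finite {i \<in> UNIV. U i \<noteq> topspace (euclidean::bool topology)} \<and>
     (\<forall>i \<in> UNIV. openin euclidean (U i)) \<and> x \<in> Pi\<^sub>E UNIV U \<and> Pi\<^sub>E UNIV U \<subseteq> T"
    unfolding openin_product_topology_alt .
  obtain U where U: "finite {i\<in>UNIV. U i \<noteq> topspace (euclidean::bool topology)}"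
     "x \<in> PiE UNIV U" "PiE UNIV U \<subseteq> T"
    using bspec[OF H assms(2)] by blast
  let ?F = "{i. U i \<noteq> UNIV}"
  have "{f. \<forall>i\<in>?F. f i = x i} \<subseteq> PiE UNIV U"
  proof
    fix f assume f: "f \<in> {f. \<forall>i\<in>?F. f i = x i}"
    have "f i \<in> U i" for i
    proof (cases "U i = UNIV")
      case False thus ?thesis using f U(2) by (auto simp: PiE_iff)
    qed auto
    thus "f \<in> PiE UNIV U" by (simp add: PiE_iff)
  qed
  moreover have "finite ?F" using U(1) by simp
  ultimately show ?thesis using U(3) by (intro exI[of _ ?F] conjI) blast+
qed

lemma closure_window:
  fixes x :: "'g \<Rightarrow> bool"
  assumes "\<And>F. finite F \<Longrightarrow> \<exists>s\<in>S. \<forall>i\<in>F. s i = x i"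
  shows "x \<in> closure S"
proof -
  have "\<forall>T. open T \<longrightarrow> x \<in> T \<longrightarrow> S \<inter> T \<noteq> {}"
  proof (intro allI impI)
    fix T assume "open T" "x \<in> T"
    then obtain F where "finite F" "{f. \<forall>i\<in>F. f i = x i} \<subseteq> T" using open_contains_window by blast
    then obtain s where "s \<in> S" "\<forall>i\<in>F. s i = x i" using assms by blast
    thus "S \<inter> T \<noteq> {}" using \<open>{f. \<forall>i\<in>F. f i = x i} \<subseteq> T\<close> by blast
  qed
  thus ?thesis unfolding closure_iff_nhds_not_empty
  proof (intro allI impI)
    fix A B assume h: "\<forall>T. open T \<longrightarrow> x \<in> T \<longrightarrow> S \<inter> T \<noteq> {}" "B \<subseteq> A" "open B" "x \<in> B"
    hence "S \<inter> B \<noteq> {}" by blast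
    thus "S \<inter> A \<noteq> {}" using h(2) by blast
  qed
qed

lemma closed_eval: "closed {f::'g\<Rightarrow>bool. f i = v}"
  by (rule closed_Collect_eq) (rule continuous_on_product_coordinates, rule continuous_on_const)

lemma continuous_shift: "continuous_on UNIV (shift g :: ('g::group_add \<Rightarrow> bool) \<Rightarrow> _)"
  unfolding shift_def by (intro continuous_on_coordinatewise_then_product continuous_on_product_coordinates)

locale setting =
  fixes \<Gamma> :: "nat \<Rightarrow> 'g::{group_add,countable} set"
  assumes norm: "\<And>n. normal_subgrp (\<Gamma> n)"
    and fidx: "\<And>n. finite_index (\<Gamma> n)"
    and dec: "\<And>n. \<Gamma> (Suc n) \<subseteq> \<Gamma> n"
    and inter: "(\<Inter>n. \<Gamma> n) = {0}"
begin

lemma sg: "subgrp (\<Gamma> n)"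
  using norm normal_subgrp_def by blast

lemma anti: "m \<le> n \<Longrightarrow> \<Gamma> n \<subseteq> \<Gamma> m"
  using lift_Suc_antimono_le[of \<Gamma>] dec by blast

lemma fin_cosets: "finite (cosets (\<Gamma> n))"
  using fidx finite_index_def by blast

lemma coset_coarsen:
  assumes "m \<le> n" "lcoset a (\<Gamma> n) = lcoset a' (\<Gamma> n)"
  shows "lcoset a (\<Gamma> m) = lcoset a' (\<Gamma> m)"
  using assms anti lcoset_eq_iff[OF sg] by blast

lemma coset_mono: "m \<le> n \<Longrightarrow> lcoset a (\<Gamma> n) \<subseteq> lcoset a (\<Gamma> m)"
  by (rule lcoset_mono[OF anti])

abbreviation "Od \<equiv> odometer \<Gamma>"

lemma od_level: "y \<in> Od \<Longrightarrow> \<exists>a. y n = lcoset a (\<Gamma> n)"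
  unfolding odometer_def mem_cosets by blast

lemma od_down_aux: "y \<in> Od \<Longrightarrow> y (k + d) = lcoset a (\<Gamma> (k + d)) \<Longrightarrow> y k = lcoset a (\<Gamma> k)"
proof (induction d)
  case (Suc d)
  have "y (Suc (k + d)) = lcoset a (\<Gamma> (Suc (k + d)))" using Suc.prems by simp
  hence "y (k + d) = lcoset a (\<Gamma> (k + d))" using Suc.prems(1) unfolding odometer_def by blast
  thus ?case using Suc by blast
qed simp

lemma od_down: "y \<in> Od \<Longrightarrow> y m = lcoset a (\<Gamma> m) \<Longrightarrow> k \<le> m \<Longrightarrow> y k = lcoset a (\<Gamma> k)"
  using od_down_aux[of y k "m - k" a] by simp

lemma od_mono: assumes "y \<in> Od" "k \<le> m" shows "y m \<subseteq> y k"
proof -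
  obtain a where a: "y m = lcoset a (\<Gamma> m)" using od_level[OF assms(1)] by blast
  show ?thesis using od_down[OF assms(1) a assms(2)] a coset_mono[OF assms(2)] by simp
qed

lemma od_eq_down: assumes "y \<in> Od" "y' \<in> Od" "y m = y' m" "k \<le> m" shows "y k = y' k"
proof -
  obtain a where a: "y m = lcoset a (\<Gamma> m)" using od_level[OF assms(1)] by blast
  show ?thesis using od_down[OF assms(1) a assms(4)] od_down[OF assms(2) _ assms(4), of a] a assms(3) by simp
qed

lemma act_level: "y n = lcoset a (\<Gamma> n) \<Longrightarrow> odometer_act g y n = lcoset (g + a) (\<Gamma> n)"
  unfolding odometer_act_def by (simp add: image_lcoset)

lemma act_od: assumes "y \<in> Od" shows "odometer_act g y \<in> Od"
  unfolding odometer_def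
proof (intro CollectI conjI allI impI)
  fix n
  obtain a where "y n = lcoset a (\<Gamma> n)" using od_level[OF assms] by blast
  thus "odometer_act g y n \<in> cosets (\<Gamma> n)" using act_level[where y=y and n=n] cosets_nonempty by metis
next
  fix n g'
  assume h: "odometer_act g y (Suc n) = lcoset g' (\<Gamma> (Suc n))"
  obtain a where a: "y (Suc n) = lcoset a (\<Gamma> (Suc n))" using od_level[OF assms] by blast
  have "lcoset (g + a) (\<Gamma> (Suc n)) = lcoset g' (\<Gamma> (Suc n))" using act_level[where y=y and n="Suc n", OF a] h by simp
  hence "lcoset (g + a) (\<Gamma> n) = lcoset g' (\<Gamma> n)" using coset_coarsen by (metis le_SucI order_refl)
  moreover have "y n = lcoset a (\<Gamma> n)" using od_down[OF assms a] by simp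
  ultimately show "odometer_act g y n = lcoset g' (\<Gamma> n)" using act_level[where y=y and n=n] by metis
qed

lemma act_free:
  assumes "y \<in> Od" "odometer_act g y = y" shows "g = 0"
proof -
  have "g \<in> \<Gamma> n" for n
  proof -
    obtain a where a: "y n = lcoset a (\<Gamma> n)" using od_level[OF assms(1)] by blast
    have "lcoset (g + a) (\<Gamma> n) = lcoset a (\<Gamma> n)" using act_level[where y=y and n=n, OF a, of g] assms(2) a by simp
    hence "- (g + a) + a \<in> \<Gamma> n" using lcoset_eq_iff[OF sg] by blast
    hence "- a + - g + a \<in> \<Gamma> n" by (simp add: minus_add)
    hence "- (- a) + (- a + - g + a) + - a \<in> \<Gamma> n" using normal_conj[OF norm] by blast
    hence "- g \<in> \<Gamma> n" by (simp only: minus_minus add.assoc right_minus add_0_right add_minus_cancel)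
    thus ?thesis using subgrp_minus_iff[OF sg] by blast
  qed
  thus ?thesis using inter by blast
qed

end

locale inf_setting = setting \<Gamma> for \<Gamma> :: "nat \<Rightarrow> 'g::{group_add,countable} set" +
  assumes infG: "infinite (UNIV :: 'g set)"
begin

definition strict :: "nat \<Rightarrow> bool" where
  "strict k \<longleftrightarrow> 0 < k \<and> \<Gamma> k \<noteq> \<Gamma> (k - 1)"

lemma ex_strict: "\<exists>k>n. strict k"
proof (rule ccontr)
  assume "\<not> (\<exists>k>n. strict k)"
  hence ns: "\<And>k. n < k \<Longrightarrow> \<Gamma> k = \<Gamma> (k - 1)" unfolding strict_def by auto
  have eq: "\<Gamma> (n + d) = \<Gamma> n" for d
  proof (induction d)
    case (Suc d) thus ?case using ns[of "n + Suc d"] by simp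
  qed simp
  have "\<Gamma> n \<subseteq> \<Gamma> k" for k
  proof (cases "k \<le> n")
    case True thus ?thesis using anti by blast
  next
    case False thus ?thesis using eq[of "k - n"] by simp
  qed
  hence "\<Gamma> n = {0}" using inter by blast
  hence "finite (cosets {0::'g})" using fin_cosets by metis
  moreover have "cosets {0::'g} = (\<lambda>g. {g}) ` UNIV" unfolding cosets_def lcoset_def by auto
  moreover have "inj (\<lambda>g::'g. {g})" by (simp add: inj_def)
  ultimately show False using infG finite_imageD by fastforce
qed

definition nxt :: "nat \<Rightarrow> nat" where
  "nxt n = (LEAST k. n < k \<and> strict k)"

lemma nxt: "n < nxt n" "strict (nxt n)"
  using LeastI_ex[OF ex_strict[of n]] unfolding nxt_def by auto

lemma nxt_min: "n < k \<Longrightarrow> strict k \<Longrightarrow> nxt n \<le> k"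
  unfolding nxt_def by (simp add: Least_le)

lemma nxt_between: "n < k \<Longrightarrow> k < nxt n \<Longrightarrow> \<not> strict k"
  using nxt_min by fastforce

lemma nxt_mono: "j \<le> n \<Longrightarrow> nxt j \<le> nxt n"
  using nxt_min[of j "nxt n"] nxt[of n] by simp

definition cnt :: "nat \<Rightarrow> nat" where
  "cnt k = card {i\<in>{1..k}. strict i}"

definition bb :: "nat \<Rightarrow> bool" where
  "bb k = odd (cnt k)"

lemma cnt_nxt: "cnt (nxt j) = Suc (cnt j)"
proof -
  have "{i\<in>{1..nxt j}. strict i} = insert (nxt j) {i\<in>{1..j}. strict i}"
  proof (intro set_eqI iffI)
    fix i assume i: "i \<in> {i\<in>{1..nxt j}. strict i}"
    show "i \<in> insert (nxt j) {i\<in>{1..j}. strict i}"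
    proof (cases "i = nxt j")
      case False
      hence "i < nxt j" using i by simp
      hence "i \<le> j" using nxt_between[of j i] i by (metis (mono_tags, lifting) mem_Collect_eq not_le)
      thus ?thesis using i by simp
    qed simp
  next
    fix i assume i: "i \<in> insert (nxt j) {i\<in>{1..j}. strict i}"
    have "1 \<le> nxt j" using nxt(2)[of j] unfolding strict_def by simp
    thus "i \<in> {i\<in>{1..nxt j}. strict i}" using i nxt[of j] by auto
  qed
  moreover have "nxt j \<notin> {i\<in>{1..j}. strict i}" using nxt[of j] by auto
  ultimately show ?thesis unfolding cnt_def by simp
qed

lemma bb_nxt: "bb (nxt j) \<noteq> bb j"
  unfolding bb_def cnt_nxt by simp

definition Lev :: "'g \<Rightarrow> 'g \<Rightarrow> nat" where
  "Lev a h = (LEAST k. h \<notin> lcoset a (\<Gamma> k))"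

definition Z :: "nat \<Rightarrow> 'g \<Rightarrow> ('g \<Rightarrow> bool) set" where
  "Z m a = {x. \<forall>h. h \<notin> lcoset a (\<Gamma> m) \<longrightarrow> x h = bb (Lev a h)}"

lemma conflict:
  assumes ne: "lcoset a (\<Gamma> n) \<noteq> lcoset a' (\<Gamma> n)"
  shows "\<exists>h. h \<notin> lcoset a (\<Gamma> (nxt n)) \<and> h \<notin> lcoset a' (\<Gamma> (nxt n)) \<and> bb (Lev a h) \<noteq> bb (Lev a' h)"
proof -
  define j where "j = (LEAST k. lcoset a (\<Gamma> k) \<noteq> lcoset a' (\<Gamma> k))"
  have jne: "lcoset a (\<Gamma> j) \<noteq> lcoset a' (\<Gamma> j)" unfolding j_def using ne by (rule LeastI)
  have jn: "j \<le> n" unfolding j_def using ne by (rule Least_le)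
  have jlt: "i < j \<Longrightarrow> lcoset a (\<Gamma> i) = lcoset a' (\<Gamma> i)" for i unfolding j_def using not_less_Least by blast
  define k where "k = nxt j"
  have jk: "j < k" "strict k" unfolding k_def using nxt by auto
  have kn: "k \<le> nxt n" unfolding k_def using nxt_mono[OF jn] .
  have "\<Gamma> k \<subseteq> \<Gamma> (k - 1)" using anti by simp
  with jk(2) obtain \<gamma> where g: "\<gamma> \<in> \<Gamma> (k - 1)" "\<gamma> \<notin> \<Gamma> k" unfolding strict_def by blast
  define h where "h = a' + \<gamma>"
  have mh: "- a' + h = \<gamma>" unfolding h_def by (simp add: add.assoc[symmetric])
  have h1: "h \<in> lcoset a' (\<Gamma> (k - 1))" using g mh by (simp add: mem_lcoset)
  have h2: "h \<notin> lcoset a' (\<Gamma> k)" using g mh by (simp add: mem_lcoset)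
  have h3: "h \<in> lcoset a' (\<Gamma> i)" if "i < k" for i
  proof -
    have "i \<le> k - 1" using that by simp
    thus ?thesis using h1 coset_mono[of i "k - 1" a'] by blast
  qed
  have Lev': "Lev a' h = k" unfolding Lev_def
    by (rule Least_equality) (use h2 h3 in \<open>auto simp: not_less[symmetric]\<close>)
  have h4: "h \<in> lcoset a' (\<Gamma> j)" using h3 jk by simp
  have h5: "h \<notin> lcoset a (\<Gamma> j)" using lcoset_disj[OF sg jne[symmetric] h4] .
  have h6: "i < j \<Longrightarrow> h \<in> lcoset a (\<Gamma> i)" for i using jlt h3 jk by auto
  have Lev: "Lev a h = j" unfolding Lev_def
    by (rule Least_equality) (use h5 h6 in \<open>auto simp: not_less[symmetric]\<close>)
  have "h \<notin> lcoset a' (\<Gamma> (nxt n))" using h2 coset_mono[OF kn] by blast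
  moreover have "h \<notin> lcoset a (\<Gamma> (nxt n))" using h5 coset_mono[of j "nxt n" a] jk kn by auto
  moreover have "bb (Lev a h) \<noteq> bb (Lev a' h)" using Lev Lev' bb_nxt[of j] k_def by simp
  ultimately show ?thesis by blast
qed

lemma Z_disj: "x \<in> Z (nxt n) a \<Longrightarrow> x \<in> Z (nxt n) a' \<Longrightarrow> lcoset a (\<Gamma> n) = lcoset a' (\<Gamma> n)"
  using conflict unfolding Z_def by blast

lemma Z_mono: "m' \<le> m \<Longrightarrow> Z m a \<subseteq> Z m' a"
  unfolding Z_def using coset_mono by blast

lemma Lev_coset:
  assumes "lcoset a (\<Gamma> m) = lcoset a' (\<Gamma> m)" "h \<notin> lcoset a (\<Gamma> m)"
  shows "Lev a h = Lev a' h"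
  unfolding Lev_def
proof (rule Least_cong_upto[of m])
  fix k assume "k \<le> m"
  thus "(h \<notin> lcoset a (\<Gamma> k)) = (h \<notin> lcoset a' (\<Gamma> k))" using coset_coarsen assms(1) by metis
qed (rule assms(2))

lemma Z_coset: "lcoset a (\<Gamma> m) = lcoset a' (\<Gamma> m) \<Longrightarrow> Z m a = Z m a'"
  unfolding Z_def using Lev_coset by (metis (no_types, opaque_lifting))

lemma Lev_shift: "Lev (g + a) h = Lev a (- g + h)"
  unfolding Lev_def by (simp add: lcoset_shift_mem)

lemma Z_shift: "x \<in> Z m a \<Longrightarrow> shift g x \<in> Z m (g + a)"
  unfolding Z_def shift_def by (simp add: lcoset_shift_mem Lev_shift)

lemma closed_Z: "closed (Z m a)"
proof -
  have "Z m a = (\<Inter>h\<in>- lcoset a (\<Gamma> m). {x. x h = bb (Lev a h)})" unfolding Z_def by blast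
  show ?thesis unfolding \<open>Z m a = _\<close> by (rule closed_INT) (intro ballI closed_eval)
qed

definition ZC :: "nat \<Rightarrow> 'g set \<Rightarrow> ('g \<Rightarrow> bool) set" where
  "ZC m c = Z m (SOME a. c = lcoset a (\<Gamma> m))"

lemma ZC_eq: "ZC m (lcoset a (\<Gamma> m)) = Z m a"
proof -
  have "lcoset a (\<Gamma> m) = lcoset (SOME a'. lcoset a (\<Gamma> m) = lcoset a' (\<Gamma> m)) (\<Gamma> m)"
    by (rule someI) (rule refl)
  thus ?thesis unfolding ZC_def using Z_coset by metis
qed

definition U :: "nat \<Rightarrow> ('g \<Rightarrow> bool) \<Rightarrow> ('g \<Rightarrow> bool) set" where
  "U m Q = \<Union> (ZC m ` {c\<in>cosets (\<Gamma> m). \<exists>a. c = lcoset a (\<Gamma> m) \<and> Q a})"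

lemma U_iff: "x \<in> U m Q \<longleftrightarrow> (\<exists>a. Q a \<and> x \<in> Z m a)"
  unfolding U_def using ZC_eq cosets_nonempty by fastforce

lemma closed_U: "closed (U m Q)"
  unfolding U_def
proof (rule closed_Union)
  show "finite (ZC m ` {c \<in> cosets (\<Gamma> m). \<exists>a. c = lcoset a (\<Gamma> m) \<and> Q a})"
    using fin_cosets by simp
  show "\<forall>T\<in>ZC m ` {c \<in> cosets (\<Gamma> m). \<exists>a. c = lcoset a (\<Gamma> m) \<and> Q a}. closed T"
    unfolding ZC_def using closed_Z by blast
qed

definition Phi :: "(nat \<Rightarrow> 'g set) \<Rightarrow> 'g \<Rightarrow> bool" where
  "Phi y h = bb (LEAST k. h \<notin> y k)"

definition covered :: "(nat \<Rightarrow> 'g set) \<Rightarrow> bool" where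
  "covered y \<longleftrightarrow> (\<forall>h. \<exists>k. h \<notin> y k)"

lemma Phi_Z: assumes "y \<in> Od" "y m = lcoset a (\<Gamma> m)" shows "Phi y \<in> Z m a"
  unfolding Z_def Phi_def Lev_def
proof (intro CollectI allI impI)
  fix h assume h: "h \<notin> lcoset a (\<Gamma> m)"
  show "bb (LEAST k. h \<notin> y k) = bb (LEAST k. h \<notin> lcoset a (\<Gamma> k))"
    using Least_cong_upto[of m "\<lambda>k. h \<notin> y k" "\<lambda>k. h \<notin> lcoset a (\<Gamma> k)"] od_down[OF assms] h assms(2)
    by metis
qed

lemma shift_Phi: "shift g (Phi y) = Phi (odometer_act g y)"
proof -
  have "h \<in> (+) g ` S \<longleftrightarrow> - g + h \<in> S" for h and S :: "'g set"
    by (auto simp: image_iff add.assoc[symmetric]) (metis add_minus_cancel)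
  thus ?thesis unfolding shift_def Phi_def odometer_act_def by (auto intro!: ext)
qed

lemma toeplitz_Phi:
  assumes "y \<in> Od" "covered y"
  shows "\<forall>h. \<exists>k. h \<in> Per_val (Phi y) (\<Gamma> k) (Phi y h)"
proof
  fix h
  obtain m where m: "h \<notin> y m" using assms(2) covered_def by blast
  define k where "k = (LEAST k. h \<notin> y k)"
  have hk: "h \<notin> y k" unfolding k_def using m by (rule LeastI)
  have "Phi y (\<gamma> + h) = Phi y h" if g: "\<gamma> \<in> \<Gamma> k" for \<gamma>
    unfolding Phi_def
  proof (rule arg_cong[where f=bb], rule Least_cong_upto[of k])
    fix j assume "j \<le> k"
    obtain a where "y j = lcoset a (\<Gamma> j)" using od_level[OF assms(1)] by blast
    moreover have "\<gamma> \<in> \<Gamma> j" using g anti[OF \<open>j \<le> k\<close>] by blast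
    ultimately show "(\<gamma> + h \<notin> y j) = (h \<notin> y j)" using normal_lcoset_left[OF norm] by simp
  next
    show "\<gamma> + h \<notin> y k"
    proof -
      obtain a where "y k = lcoset a (\<Gamma> k)" using od_level[OF assms(1)] by blast
      thus ?thesis using hk g normal_lcoset_left[OF norm] by simp
    qed
  qed
  thus "\<exists>k. h \<in> Per_val (Phi y) (\<Gamma> k) (Phi y h)" unfolding Per_val_def by blast
qed

lemma toeplitz_Phi': "y \<in> Od \<Longrightarrow> covered y \<Longrightarrow> toeplitz_array (Phi y)"
  unfolding toeplitz_array_def Per_def
proof (intro allI)
  fix h assume "y \<in> Od" "covered y"
  then obtain k where "h \<in> Per_val (Phi y) (\<Gamma> k) (Phi y h)" using toeplitz_Phi by blast
  thus "\<exists>\<Gamma>'. finite_index \<Gamma>' \<and> h \<in> (\<Union>\<alpha>. Per_val (Phi y) \<Gamma>' \<alpha>)" using fidx by blast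
qed

end

lemma cont_discrete:
  assumes "f \<in> topspace T \<rightarrow> U" "\<And>u. u \<in> U \<Longrightarrow> openin T {x\<in>topspace T. f x = u}"
  shows "continuous_map T (discrete_topology U) f"
  unfolding continuous_map_def
proof (intro conjI allI impI)
  show "f \<in> topspace T \<rightarrow> topspace (discrete_topology U)" using assms(1) by simp
  fix V assume "openin (discrete_topology U) V"
  hence V: "V \<subseteq> U" by simp
  have "{x \<in> topspace T. f x \<in> V} = (\<Union>u\<in>V. {x\<in>topspace T. f x = u})" by blast
  moreover have "openin T (\<Union>u\<in>V. {x\<in>topspace T. f x = u})"
    using V assms(2) by (intro openin_Union) blast
  ultimately show "openin T {x \<in> topspace T. f x \<in> V}" by simp
qed

locale constr = inf_setting \<Gamma> for \<Gamma> :: "nat \<Rightarrow> 'g::{group_add,countable} set" +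
  fixes ys :: "nat \<Rightarrow> 'g set"
  assumes ys_od: "ys \<in> odometer \<Gamma>" and ys_cov: "covered ys"
begin

definition eta :: "'g \<Rightarrow> bool" where "eta = Phi ys"
definition XX :: "('g \<Rightarrow> bool) set" where "XX = orbit_closure eta"
definition pi :: "('g \<Rightarrow> bool) \<Rightarrow> nat \<Rightarrow> 'g set" where
  "pi x = (\<lambda>n. THE c. \<exists>a. c = lcoset a (\<Gamma> n) \<and> x \<in> Z (nxt n) a)"

lemma XX_def': "XX = closure (range (\<lambda>g. shift g eta))"
  unfolding XX_def orbit_closure_def ..

lemma closed_XX: "closed XX" unfolding XX_def' by simp

lemma orbit_XX: "shift g eta \<in> XX" unfolding XX_def' by (rule subsetD[OF closure_subset]) (rule rangeI)

lemma orbit_Z: assumes "ys m = lcoset a (\<Gamma> m)" shows "shift g eta \<in> Z m (g + a)"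
  unfolding eta_def shift_Phi
  by (rule Phi_Z[OF act_od[OF ys_od]]) (rule act_level[where y=ys and n=m, OF assms])

lemma XX_Z: assumes "x \<in> XX" shows "\<exists>a. x \<in> Z m a"
proof -
  have "range (\<lambda>g. shift g eta) \<subseteq> U m (\<lambda>_. True)"
  proof
    fix x assume "x \<in> range (\<lambda>g. shift g eta)"
    then obtain g where g: "x = shift g eta" by blast
    obtain a where "ys m = lcoset a (\<Gamma> m)" using od_level[OF ys_od] by blast
    thus "x \<in> U m (\<lambda>_. True)" using orbit_Z g U_iff by blast
  qed
  hence "XX \<subseteq> U m (\<lambda>_. True)" unfolding XX_def' using closed_U closure_minimal by blast
  thus ?thesis using assms U_iff by blast
qed

lemma pi_eq: assumes "x \<in> Z (nxt n) a" shows "pi x n = lcoset a (\<Gamma> n)"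
  unfolding pi_def
proof (rule the_equality)
  show "\<exists>a'. lcoset a (\<Gamma> n) = lcoset a' (\<Gamma> n) \<and> x \<in> Z (nxt n) a'" using assms by blast
  fix c assume "\<exists>a'. c = lcoset a' (\<Gamma> n) \<and> x \<in> Z (nxt n) a'"
  thus "c = lcoset a (\<Gamma> n)" using Z_disj assms by blast
qed

lemma pi_X: assumes "x \<in> XX" shows "\<exists>a. x \<in> Z (nxt n) a \<and> pi x n = lcoset a (\<Gamma> n)"
  using XX_Z[OF assms] pi_eq by blast

lemma pi_od: assumes "x \<in> XX" shows "pi x \<in> Od"
  unfolding odometer_def
proof (intro CollectI conjI allI impI)
  fix n show "pi x n \<in> cosets (\<Gamma> n)" using pi_X[OF assms, of n] cosets_nonempty by metis
next
  fix n g'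
  assume h: "pi x (Suc n) = lcoset g' (\<Gamma> (Suc n))"
  obtain a where a: "x \<in> Z (nxt (Suc n)) a" "pi x (Suc n) = lcoset a (\<Gamma> (Suc n))" using pi_X[OF assms] by blast
  have "x \<in> Z (nxt n) a" using a(1) Z_mono[OF nxt_mono[of n "Suc n"]] by auto
  hence "pi x n = lcoset a (\<Gamma> n)" by (rule pi_eq)
  moreover have "lcoset a (\<Gamma> (Suc n)) = lcoset g' (\<Gamma> (Suc n))" using a(2) h by simp
  hence "lcoset a (\<Gamma> n) = lcoset g' (\<Gamma> n)" by (rule coset_coarsen[rotated]) simp
  ultimately show "pi x n = lcoset g' (\<Gamma> n)" by simp
qed

lemma pi_shift: assumes "x \<in> XX" shows "pi (shift g x) = odometer_act g (pi x)"
proof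
  fix n
  obtain a where a: "x \<in> Z (nxt n) a" "pi x n = lcoset a (\<Gamma> n)" using pi_X[OF assms] by blast
  have "pi (shift g x) n = lcoset (g + a) (\<Gamma> n)" using pi_eq[OF Z_shift[OF a(1)]] .
  thus "pi (shift g x) n = odometer_act g (pi x) n" using act_level[where y="pi x" and n=n, OF a(2)] by simp
qed

lemma pi_Phi: assumes "y \<in> Od" shows "pi (Phi y) = y"
proof
  fix n
  obtain a where a: "y (nxt n) = lcoset a (\<Gamma> (nxt n))" using od_level[OF assms] by blast
  have "pi (Phi y) n = lcoset a (\<Gamma> n)" using pi_eq[OF Phi_Z[OF assms a]] .
  also have "\<dots> = y n" using od_down[OF assms a] nxt(1)[of n] by simp
  finally show "pi (Phi y) n = y n" .
qed

lemma Phi_XX: assumes y: "y \<in> Od" "covered y" shows "Phi y \<in> XX"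
  unfolding XX_def'
proof (rule closure_window)
  fix F :: "'g set" assume F: "finite F"
  have "\<forall>h\<in>F. \<exists>k. h \<notin> y k" using y(2) covered_def by blast
  then obtain kf where kf: "\<And>h. h \<in> F \<Longrightarrow> h \<notin> y (kf h)" by metis
  define m where "m = Max (kf ` F)"
  have hm: "h \<notin> y m" if "h \<in> F" for h
  proof -
    have "kf h \<le> m" unfolding m_def using F that by simp
    thus ?thesis using od_mono[OF y(1)] kf[OF that] by blast
  qed
  obtain a where a: "y m = lcoset a (\<Gamma> m)" using od_level[OF y(1)] by blast
  obtain a0 where a0: "ys m = lcoset a0 (\<Gamma> m)" using od_level[OF ys_od] by blast
  define g where "g = a + - a0"
  have ga: "g + a0 = a" unfolding g_def by (simp add: add.assoc)
  have s: "shift g eta \<in> Z m a" using orbit_Z[OF a0, of g] ga by simp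
  have p: "Phi y \<in> Z m a" by (rule Phi_Z[OF y(1) a])
  have "\<forall>h\<in>F. shift g eta h = Phi y h"
    using s p hm a unfolding Z_def by auto
  thus "\<exists>s\<in>range (\<lambda>g. shift g eta). \<forall>i\<in>F. s i = Phi y i" by blast
qed

lemma eta_XX: "eta \<in> XX" unfolding eta_def using Phi_XX ys_od ys_cov by blast

lemma pi_eta: "pi eta = ys" unfolding eta_def using pi_Phi ys_od by blast

lemma toeplitz_eta: "toeplitz_array eta" unfolding eta_def using toeplitz_Phi' ys_od ys_cov by blast

lemma XX_shift: assumes "x \<in> XX" shows "shift g x \<in> XX"
proof -
  have "shift g ` closure (range (\<lambda>h. shift h eta)) \<subseteq> XX"
  proof (rule image_closure_subset)
    show "continuous_on (closure (range (\<lambda>h. shift h eta))) (shift g)"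
      using continuous_shift continuous_on_subset by blast
    show "closed XX" by (rule closed_XX)
    show "shift g ` range (\<lambda>h. shift h eta) \<subseteq> XX"
    proof
      fix x assume "x \<in> shift g ` range (\<lambda>h. shift h eta)"
      then obtain h where "x = shift g (shift h eta)" by blast
      moreover have "shift g (shift h eta) = shift (g + h) eta"
        unfolding shift_def by (simp only: minus_add add.assoc)
      ultimately show "x \<in> XX" using orbit_XX by simp
    qed
  qed
  thus ?thesis using assms unfolding XX_def' by blast
qed

lemma free_XX: "free_shift XX"
  unfolding free_shift_def
proof (intro ballI allI impI)
  fix x g assume x: "x \<in> XX" and e: "shift g x = x"
  have "odometer_act g (pi x) = pi x" using pi_shift[OF x, of g] e by simp
  thus "g = 0" using act_free pi_od[OF x] by blast
qed

lemma pi_iff_U: assumes "x \<in> XX" shows "x \<in> U (nxt n) (\<lambda>a. lcoset a (\<Gamma> n) \<in> C) \<longleftrightarrow> pi x n \<in> C"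
  unfolding U_iff using pi_X[OF assms, of n] pi_eq by metis

lemma pi_cont: "continuous_map (top_of_set XX) (odometer_top \<Gamma>) pi"
  unfolding odometer_top_def continuous_map_in_subtopology
proof (intro conjI)
  show "pi \<in> topspace (top_of_set XX) \<rightarrow> Od"
  proof
    fix x assume "x \<in> topspace (top_of_set XX)"
    hence "x \<in> XX" by simp
    thus "pi x \<in> Od" by (rule pi_od)
  qed
  show "continuous_map (top_of_set XX) (product_topology (\<lambda>n. discrete_topology (cosets (\<Gamma> n))) UNIV) pi"
    unfolding continuous_map_componentwise_UNIV
  proof
    fix n
    show "continuous_map (top_of_set XX) (discrete_topology (cosets (\<Gamma> n))) (\<lambda>x. pi x n)"
    proof (rule cont_discrete)
      show "(\<lambda>x. pi x n) \<in> topspace (top_of_set XX) \<rightarrow> cosets (\<Gamma> n)"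
      proof
        fix x assume "x \<in> topspace (top_of_set XX)"
        hence "pi x \<in> Od" using pi_od by simp
        thus "pi x n \<in> cosets (\<Gamma> n)" unfolding odometer_def by blast
      qed
      fix c
      have "{x \<in> topspace (top_of_set XX). pi x n = c} = XX \<inter> - U (nxt n) (\<lambda>a. lcoset a (\<Gamma> n) \<in> - {c})"
      proof (intro set_eqI)
        fix x show "x \<in> {x \<in> topspace (top_of_set XX). pi x n = c} \<longleftrightarrow> x \<in> XX \<inter> - U (nxt n) (\<lambda>a. lcoset a (\<Gamma> n) \<in> - {c})"
          using pi_iff_U[of x n "- {c}"] by auto
      qed
      moreover have "open (- U (nxt n) (\<lambda>a. lcoset a (\<Gamma> n) \<in> - {c}))" using closed_U by (simp add: open_Compl)
      ultimately show "openin (top_of_set XX) {x \<in> topspace (top_of_set XX). pi x n = c}"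
        by (simp add: openin_open_Int)
    qed
  qed
qed

lemma compact_XX: "compact XX"
  using compact_Int_closed[OF compact_UNIV_fun closed_XX] by simp

lemma pi_surj: "pi ` XX = Od"
proof
  show "pi ` XX \<subseteq> Od" using pi_od by blast
  show "Od \<subseteq> pi ` XX"
  proof
    fix y assume y: "y \<in> Od"
    define A where "A n = U (nxt n) (\<lambda>a. lcoset a (\<Gamma> n) \<in> {y n})" for n
    have A: "x \<in> XX \<Longrightarrow> x \<in> A n \<longleftrightarrow> pi x n = y n" for x n unfolding A_def using pi_iff_U[of x n "{y n}"] by simp
    have ne: "XX \<inter> A N \<noteq> {}" for N
    proof -
      obtain a where a: "y N = lcoset a (\<Gamma> N)" using od_level[OF y] by blast
      obtain a0 where a0: "ys N = lcoset a0 (\<Gamma> N)" using od_level[OF ys_od] by blast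
      define g where "g = a + - a0"
      have ga: "g + a0 = a" unfolding g_def by (simp add: add.assoc)
      have "pi (shift g eta) N = odometer_act g ys N" using pi_shift[OF eta_XX] pi_eta by simp
      also have "\<dots> = y N" using act_level[where y=ys and n=N, OF a0] ga a by simp
      finally show ?thesis using A orbit_XX by blast
    qed
    have down: "XX \<inter> A N \<subseteq> A n" if "n \<le> N" for n N
    proof
      fix x assume "x \<in> XX \<inter> A N"
      hence "x \<in> XX" "pi x N = y N" using A by auto
      hence "pi x n = y n" using od_eq_down[OF pi_od y _ that] by blast
      thus "x \<in> A n" using A \<open>x \<in> XX\<close> by blast
    qed
    have "XX \<inter> \<Inter>(range A) \<noteq> {}"
    proof (rule compact_imp_fip[OF compact_XX])
      show "closed t" if "t \<in> range A" for t using that closed_U unfolding A_def by blast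
      fix f' assume f': "finite f'" "f' \<subseteq> range A"
      then obtain C where C: "finite C" "f' = A ` C" using finite_subset_image by metis
      define N where "N = Max (insert 0 C)"
      have le: "c \<le> N" if "c \<in> C" for c unfolding N_def using C(1) that by (intro Max_ge) auto
      have "XX \<inter> A N \<subseteq> XX \<inter> \<Inter> f'"
        using down le C(2) by blast
      thus "XX \<inter> \<Inter> f' \<noteq> {}" using ne[of N] by blast
    qed
    then obtain x where "x \<in> XX" "\<And>n. x \<in> A n" by blast
    hence "pi x = y" using A by blast
    thus "y \<in> pi ` XX" using \<open>x \<in> XX\<close> by blast
  qed
qed

lemma fiber: "\<exists>!x. x \<in> XX \<and> pi x = ys"
proof (rule ex1I[of _ eta])
  show "eta \<in> XX \<and> pi eta = ys" using eta_XX pi_eta by blast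
  fix x assume x: "x \<in> XX \<and> pi x = ys"
  show "x = eta"
  proof
    fix h
    obtain k where k: "h \<notin> ys k" using ys_cov covered_def by blast
    obtain a where a: "x \<in> Z (nxt k) a" "pi x k = lcoset a (\<Gamma> k)" using pi_X x by blast
    have yk: "ys k = lcoset a (\<Gamma> k)" using a(2) x by simp
    have "h \<notin> lcoset a (\<Gamma> (nxt k))" using k yk coset_mono[of k "nxt k" a] nxt(1)[of k] by auto
    hence "x h = bb (Lev a h)" using a(1) unfolding Z_def by blast
    moreover have "eta \<in> Z k a" unfolding eta_def by (rule Phi_Z[OF ys_od yk])
    hence "eta h = bb (Lev a h)" using k yk unfolding Z_def by blast
    ultimately show "x h = eta h" by simp
  qed
qed

lemma almost_XX: "almost_1_1_ext_odometer XX \<Gamma>"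
  unfolding almost_1_1_ext_odometer_def
proof (intro exI[of _ pi] conjI)
  show "continuous_map (top_of_set XX) (odometer_top \<Gamma>) pi" by (rule pi_cont)
  show "pi ` XX = Od" by (rule pi_surj)
  show "\<forall>g. \<forall>x\<in>XX. pi (shift g x) = odometer_act g (pi x)" using pi_shift by blast
  show "\<exists>y\<in>Od. \<exists>!x. x \<in> XX \<and> pi x = y" using fiber ys_od by blast
qed

lemma toeplitz_XX: "toeplitz_subshift XX"
  unfolding toeplitz_subshift_def XX_def using toeplitz_eta by blast

end

fun psum :: "(nat \<Rightarrow> 'g::group_add) \<Rightarrow> nat \<Rightarrow> 'g" where
  "psum d 0 = d 0"
| "psum d (Suc n) = psum d n + d (Suc n)"

lemma psum_cong: "(\<And>j. j \<le> n \<Longrightarrow> d j = e j) \<Longrightarrow> psum d n = psum e n"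
  by (induction n) auto

context inf_setting
begin

definition par :: "nat \<Rightarrow> 'g set" where
  "par j = (case j of 0 \<Rightarrow> UNIV | Suc i \<Rightarrow> \<Gamma> i)"

lemma par_sg: "subgrp (par j)"
  by (cases j) (auto simp: par_def subgrp_def sg[unfolded subgrp_def])

lemma Gam_par: "\<Gamma> j \<subseteq> par j"
  by (cases j) (auto simp: par_def dec[THEN subsetD])

definition rp :: "'g set \<Rightarrow> 'g" where "rp C = (SOME t. t \<in> C)"

definition Tr :: "nat \<Rightarrow> 'g set" where
  "Tr j = rp ` {lcoset z (\<Gamma> j) | z. z \<in> par j}"

lemma rp_mem: "rp (lcoset z (\<Gamma> j)) \<in> lcoset z (\<Gamma> j)"
  unfolding rp_def by (rule someI) (rule lcoset_self[OF sg])

lemma Tr_fin: "finite (Tr j)"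
proof -
  have "{lcoset z (\<Gamma> j) | z. z \<in> par j} \<subseteq> cosets (\<Gamma> j)" using cosets_nonempty by blast
  thus ?thesis unfolding Tr_def using fin_cosets finite_subset by blast
qed

lemma Tr_sub: "Tr j \<subseteq> par j"
proof
  fix t assume "t \<in> Tr j"
  then obtain z where z: "z \<in> par j" "t = rp (lcoset z (\<Gamma> j))" unfolding Tr_def by blast
  hence "- z + t \<in> \<Gamma> j" using rp_mem mem_lcoset by metis
  hence "- z + t \<in> par j" using Gam_par by blast
  hence "z + (- z + t) \<in> par j" using subgrpD(2)[OF par_sg] z(1) by blast
  thus "t \<in> par j" by (simp add: add.assoc[symmetric])
qed

lemma Tr_ex: assumes "z \<in> par j" shows "\<exists>t\<in>Tr j. - t + z \<in> \<Gamma> j"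
proof -
  define t where "t = rp (lcoset z (\<Gamma> j))"
  have "t \<in> Tr j" unfolding Tr_def t_def using assms by blast
  moreover have "t \<in> lcoset z (\<Gamma> j)" unfolding t_def by (rule rp_mem)
  hence "lcoset t (\<Gamma> j) = lcoset z (\<Gamma> j)" using lcoset_eq_iff_mem[OF sg] by metis
  hence "- t + z \<in> \<Gamma> j" using lcoset_eq_iff[OF sg] by blast
  ultimately show ?thesis by blast
qed

lemma Tr_form: assumes "t \<in> Tr j" shows "t = rp (lcoset t (\<Gamma> j))"
proof -
  obtain z where z: "t = rp (lcoset z (\<Gamma> j))" using assms unfolding Tr_def by blast
  hence "t \<in> lcoset z (\<Gamma> j)" using rp_mem by metis
  hence "lcoset z (\<Gamma> j) = lcoset t (\<Gamma> j)" using lcoset_eq_iff_mem[OF sg] by metis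
  thus ?thesis using z by simp
qed

lemma Tr_uniq:
  assumes "t \<in> Tr j" "t' \<in> Tr j" "- t + z \<in> \<Gamma> j" "- t' + z \<in> \<Gamma> j"
  shows "t = t'"
proof -
  have "lcoset t (\<Gamma> j) = lcoset z (\<Gamma> j)" "lcoset t' (\<Gamma> j) = lcoset z (\<Gamma> j)"
    using assms(3,4) lcoset_eq_iff[OF sg] by blast+
  thus ?thesis using Tr_form[OF assms(1)] Tr_form[OF assms(2)] by simp
qed

lemma Tr_ne: "Tr j \<noteq> {}"
  using Tr_ex[of 0 j] subgrpD(1)[OF par_sg] by blast

lemma Tr_card2: assumes "strict j" shows "2 \<le> card (Tr j)"
proof -
  obtain i where i: "j = Suc i" using assms strict_def by (cases j) auto
  have "\<Gamma> j \<noteq> par j" using assms i unfolding strict_def par_def by simp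
  moreover have "\<Gamma> j \<subseteq> par j" by (rule Gam_par)
  ultimately obtain \<gamma> where g: "\<gamma> \<in> par j" "\<gamma> \<notin> \<Gamma> j" by blast
  obtain t0 where t0: "t0 \<in> Tr j" "- t0 + 0 \<in> \<Gamma> j" using Tr_ex[of 0 j] subgrpD(1)[OF par_sg] by blast
  obtain t1 where t1: "t1 \<in> Tr j" "- t1 + \<gamma> \<in> \<Gamma> j" using Tr_ex[OF g(1)] by blast
  have "t0 \<noteq> t1"
  proof
    assume "t0 = t1"
    hence "- t0 \<in> \<Gamma> j" "- t0 + \<gamma> \<in> \<Gamma> j" using t0 t1 by auto
    hence "t0 \<in> \<Gamma> j" "- t0 + \<gamma> \<in> \<Gamma> j" using subgrp_minus_iff[OF sg] by auto
    hence "t0 + (- t0 + \<gamma>) \<in> \<Gamma> j" using subgrpD(2)[OF sg] by blast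
    thus False using g(2) by (simp add: add.assoc[symmetric])
  qed
  hence "card {t0, t1} \<le> card (Tr j)" using t0 t1 Tr_fin by (intro card_mono) auto
  thus ?thesis using \<open>t0 \<noteq> t1\<close> by simp
qed

definition PP :: "(nat \<Rightarrow> 'g) measure" where
  "PP = PiM UNIV (\<lambda>j. uniform_count_measure (Tr j))"

lemma space_PP: "space PP = {d. \<forall>j. d j \<in> Tr j}"
  unfolding PP_def space_PiM by (auto simp: space_uniform_count_measure PiE_def Pi_def)

lemma prob_PP: "prob_space PP"
  unfolding PP_def by (rule prob_space_PiM) (intro prob_space_uniform_count_measure Tr_fin Tr_ne)

definition odo :: "(nat \<Rightarrow> 'g) \<Rightarrow> nat \<Rightarrow> 'g set" where
  "odo d n = lcoset (psum d n) (\<Gamma> n)"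

lemma odo_od: assumes "d \<in> space PP" shows "odo d \<in> Od"
  unfolding odometer_def
proof (intro CollectI conjI allI impI)
  fix n show "odo d n \<in> cosets (\<Gamma> n)" unfolding odo_def by (rule cosets_nonempty)
next
  fix n g assume h: "odo d (Suc n) = lcoset g (\<Gamma> (Suc n))"
  have "d (Suc n) \<in> \<Gamma> n" using assms Tr_sub[of "Suc n"] unfolding space_PP par_def by auto
  hence "- psum d n + (psum d n + d (Suc n)) \<in> \<Gamma> n" by (simp add: add.assoc[symmetric])
  hence e1: "lcoset (psum d n) (\<Gamma> n) = lcoset (psum d n + d (Suc n)) (\<Gamma> n)" using lcoset_eq_iff[OF sg] by blast
  have "lcoset (psum d n + d (Suc n)) (\<Gamma> n) = lcoset g (\<Gamma> n)"
    using h unfolding odo_def by (intro coset_coarsen[of n "Suc n"]) auto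
  thus "odo d n = lcoset g (\<Gamma> n)" unfolding odo_def using e1 by simp
qed

lemma ext_digits: assumes "\<And>j. j \<le> n \<Longrightarrow> t j \<in> Tr j"
  shows "(\<lambda>j. if j \<le> n then t j else rp (Tr j)) \<in> space PP"
proof -
  have "rp (Tr j) \<in> Tr j" for j unfolding rp_def using Tr_ne by (simp add: some_in_eq)
  thus ?thesis unfolding space_PP using assms by auto
qed

lemma digits:
  assumes "c \<in> cosets (\<Gamma> n)"
  shows "\<exists>t. (\<forall>j\<le>n. t j \<in> Tr j) \<and> (\<forall>d\<in>space PP. odo d n = c \<longleftrightarrow> (\<forall>j\<le>n. d j = t j))"
  using assms
proof (induction n arbitrary: c)
  case 0
  then obtain z where c: "c = lcoset z (\<Gamma> 0)" unfolding mem_cosets by blast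
  obtain t0 where t0: "t0 \<in> Tr 0" "- t0 + z \<in> \<Gamma> 0" using Tr_ex[of z 0] by (auto simp: par_def)
  show ?case
  proof (intro exI[of _ "\<lambda>_. t0"] conjI ballI allI impI)
    show "j \<le> 0 \<Longrightarrow> t0 \<in> Tr j" for j using t0 by simp
    fix d assume d: "d \<in> space PP"
    have "odo d 0 = c \<longleftrightarrow> - d 0 + z \<in> \<Gamma> 0" unfolding odo_def c using lcoset_eq_iff[OF sg] by simp
    also have "\<dots> \<longleftrightarrow> d 0 = t0" using Tr_uniq[of "d 0" 0 t0 z] t0 d unfolding space_PP by auto
    finally show "odo d 0 = c \<longleftrightarrow> (\<forall>j\<le>0. d j = t0)" by simp
  qed
next
  case (Suc n)
  then obtain z where c: "c = lcoset z (\<Gamma> (Suc n))" unfolding mem_cosets by blast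
  obtain t where t: "\<forall>j\<le>n. t j \<in> Tr j" "\<forall>d\<in>space PP. odo d n = lcoset z (\<Gamma> n) \<longleftrightarrow> (\<forall>j\<le>n. d j = t j)"
    using Suc.IH[of "lcoset z (\<Gamma> n)"] cosets_nonempty by blast
  define s where "s = psum t n"
  define e where "e = (\<lambda>j. if j \<le> n then t j else rp (Tr j))"
  have e: "e \<in> space PP" unfolding e_def using t(1) by (intro ext_digits) auto
  have "odo e n = lcoset z (\<Gamma> n)" using t(2) e unfolding e_def by auto
  moreover have "psum e n = s" unfolding s_def e_def by (rule psum_cong) auto
  ultimately have "lcoset s (\<Gamma> n) = lcoset z (\<Gamma> n)" unfolding odo_def by simp
  hence sz: "- s + z \<in> par (Suc n)" using lcoset_eq_iff[OF sg] by (simp add: par_def)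
  obtain t' where t': "t' \<in> Tr (Suc n)" "- t' + (- s + z) \<in> \<Gamma> (Suc n)" using Tr_ex[OF sz] by blast
  define t2 where "t2 = t(Suc n := t')"
  show ?case
  proof (intro exI[of _ t2] conjI ballI allI impI)
    show "j \<le> Suc n \<Longrightarrow> t2 j \<in> Tr j" for j using t(1) t' unfolding t2_def by (cases "j = Suc n") auto
    fix d assume d: "d \<in> space PP"
    have key: "odo d (Suc n) = c \<longleftrightarrow> - d (Suc n) + (- psum d n + z) \<in> \<Gamma> (Suc n)"
      unfolding odo_def c psum.simps lcoset_eq_iff[OF sg] by (simp only: minus_add add.assoc)
    show "odo d (Suc n) = c \<longleftrightarrow> (\<forall>j\<le>Suc n. d j = t2 j)"
    proof
      assume h: "odo d (Suc n) = c"
      have "odo d n = lcoset z (\<Gamma> n)" using odo_od[OF d] h c unfolding odometer_def by blast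
      hence dt: "\<forall>j\<le>n. d j = t j" using t(2) d by blast
      hence "psum d n = s" unfolding s_def by (intro psum_cong) auto
      hence "- d (Suc n) + (- s + z) \<in> \<Gamma> (Suc n)" using key h by simp
      hence "d (Suc n) = t'" using Tr_uniq[of "d (Suc n)" "Suc n" t'] t' d unfolding space_PP by auto
      thus "\<forall>j\<le>Suc n. d j = t2 j" using dt unfolding t2_def by (auto simp: le_Suc_eq)
    next
      assume h: "\<forall>j\<le>Suc n. d j = t2 j"
      hence "\<forall>j\<le>n. d j = t j" unfolding t2_def by auto
      hence "psum d n = s" unfolding s_def by (intro psum_cong) auto
      moreover have "d (Suc n) = t'" using h unfolding t2_def by auto
      ultimately show "odo d (Suc n) = c" using key t'(2) by simp
    qed
  qed
qed

definition kappa :: "nat \<Rightarrow> real" where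
  "kappa n = (\<Prod>j\<in>{..n}. 1 / real (card (Tr j)))"

lemma cyl_sets: "{d\<in>space PP. \<forall>j\<le>n. d j = t j} \<in> sets PP"
proof -
  have "{d\<in>space PP. \<forall>j\<in>{..n}. d j \<in> {x\<in>Tr j. x = t j}} \<in> sets PP"
    unfolding PP_def
    by (intro sets.sets_Collect_finite_All sets_Collect_single') (auto simp: sets_uniform_count_measure space_uniform_count_measure)
  moreover have sp: "d \<in> space PP \<Longrightarrow> d j \<in> Tr j" for d j using space_PP by blast
  have "{d\<in>space PP. \<forall>j\<in>{..n}. d j \<in> {x\<in>Tr j. x = t j}} = {d\<in>space PP. \<forall>j\<le>n. d j = t j}"
    using sp by (intro Collect_cong conj_cong refl) (simp, blast)
  ultimately show ?thesis by metis
qed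

lemma cyl_measure:
  assumes "\<And>j. j \<le> n \<Longrightarrow> t j \<in> Tr j"
  shows "measure PP {d\<in>space PP. \<forall>j\<le>n. d j = t j} = kappa n"
proof -
  interpret M': prob_space "uniform_count_measure (Tr i)" for i
    by (intro prob_space_uniform_count_measure Tr_fin Tr_ne)
  interpret PS: product_prob_space "\<lambda>j. uniform_count_measure (Tr j)" UNIV
    by unfold_locales
  have "measure PP {d\<in>space PP. \<forall>j\<in>{..n}. d j \<in> {t j}} = (\<Prod>j\<in>{..n}. measure (uniform_count_measure (Tr j)) {t j})"
    unfolding PP_def
    by (subst PS.measure_PiM_emb[symmetric]) (auto simp: sets_uniform_count_measure assms prod_emb_def space_PiM PiE_def Pi_def intro!: arg_cong[where f="measure _"])
  also have "\<dots> = kappa n"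
    unfolding kappa_def using assms by (intro prod.cong refl) (simp add: measure_uniform_count_measure Tr_fin)
  finally show ?thesis by (simp add: Ball_def atMost_iff)
qed

lemma odo_fiber_sets: "{d\<in>space PP. odo d n = c} \<in> sets PP"
proof (cases "c \<in> cosets (\<Gamma> n)")
  case True
  then obtain t where t: "\<forall>d\<in>space PP. odo d n = c \<longleftrightarrow> (\<forall>j\<le>n. d j = t j)" using digits by blast
  have eq: "{d\<in>space PP. odo d n = c} = {d\<in>space PP. \<forall>j\<le>n. d j = t j}"
  proof (intro Collect_cong)
    fix d
    show "(d \<in> space PP \<and> odo d n = c) = (d \<in> space PP \<and> (\<forall>j\<le>n. d j = t j))"
    proof (cases "d \<in> space PP")
      case True thus ?thesis using bspec[OF t True] by simp
    qed simp
  qed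
  show ?thesis unfolding eq by (rule cyl_sets)
next
  case False
  have e: "{d\<in>space PP. odo d n = c} = {}" unfolding odo_def using cosets_nonempty False by auto
  show ?thesis unfolding e by (rule sets.empty_sets)
qed

lemma odo_fiber_measure: assumes "c \<in> cosets (\<Gamma> n)" shows "measure PP {d\<in>space PP. odo d n = c} = kappa n"
proof -
  obtain t where t: "\<forall>j\<le>n. t j \<in> Tr j" "\<forall>d\<in>space PP. odo d n = c \<longleftrightarrow> (\<forall>j\<le>n. d j = t j)"
    using digits[OF assms] by blast
  have eq: "{d\<in>space PP. odo d n = c} = {d\<in>space PP. \<forall>j\<le>n. d j = t j}"
  proof (intro Collect_cong)
    fix d
    show "(d \<in> space PP \<and> odo d n = c) = (d \<in> space PP \<and> (\<forall>j\<le>n. d j = t j))"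
    proof (cases "d \<in> space PP")
      case True thus ?thesis using bspec[OF t(2) True] by simp
    qed simp
  qed
  show ?thesis unfolding eq by (rule cyl_measure) (use t(1) in blast)
qed

lemma odo_meas: "(\<lambda>d. odo d n) \<in> measurable PP (count_space (cosets (\<Gamma> n)))"
proof (subst measurable_count_space_eq2[OF fin_cosets], intro conjI ballI)
  show "(\<lambda>d. odo d n) \<in> space PP \<rightarrow> cosets (\<Gamma> n)" unfolding odo_def using cosets_nonempty by blast
  fix c
  have "(\<lambda>d. odo d n) -` {c} \<inter> space PP = {d\<in>space PP. odo d n = c}" by auto
  thus "(\<lambda>d. odo d n) -` {c} \<inter> space PP \<in> sets PP" using odo_fiber_sets by simp
qed

lemma pred_odo[measurable]: "Measurable.pred PP (\<lambda>d. h \<notin> odo d k)"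
  by (rule measurable_compose[OF odo_meas measurable_count_space])

end

instance bool :: second_countable_topology
proof
  have "open = generate_topology (UNIV :: bool set set)"
  proof (intro ext iffI)
    fix S :: "bool set" show "generate_topology UNIV S" by (rule generate_topology.Basis) simp
  next
    fix S :: "bool set" show "open S" by (rule discrete_topology_class.open_discrete)
  qed
  thus "\<exists>B::bool set set. countable B \<and> open = generate_topology B" by (intro exI[of _ UNIV]) simp
qed

context inf_setting
begin

lemma pred_odo_in[measurable]: "Measurable.pred PP (\<lambda>d. h \<in> odo d k)"
  by (rule measurable_compose[OF odo_meas measurable_count_space])

definition Psi :: "('g \<Rightarrow> bool) \<Rightarrow> (nat \<Rightarrow> 'g) \<Rightarrow> 'g \<Rightarrow> bool" where
  "Psi e d = (if covered (odo d) then Phi (odo d) else e)"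

lemma pred_cov[measurable]: "Measurable.pred PP (\<lambda>d. covered (odo d))"
  unfolding covered_def by measurable

lemma Psi_comp_meas: "(\<lambda>d. Psi e d h) \<in> measurable PP (count_space UNIV)"
proof -
  have "(\<lambda>d. Psi e d h) = (\<lambda>d. if covered (odo d) then bb (LEAST k. h \<notin> odo d k) else e h)"
    by (auto simp: Psi_def Phi_def)
  moreover have "(\<lambda>d. if covered (odo d) then bb (LEAST k. h \<notin> odo d k) else e h) \<in> measurable PP (count_space UNIV)"
    by measurable
  ultimately show ?thesis by simp
qed

lemma Psi_meas: "Psi e \<in> measurable PP (PiM UNIV (\<lambda>_. borel :: bool measure))"
proof -
  have "(\<lambda>\<omega> i. Psi e \<omega> i) \<in> measurable PP (PiM UNIV (\<lambda>_. borel :: bool measure))"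
  proof (rule measurable_PiM_single')
    fix i :: 'g
    show "(\<lambda>\<omega>. Psi e \<omega> i) \<in> measurable PP borel"
      using Psi_comp_meas measurable_cong_sets[OF refl sets_borel_eq_count_space] by blast
  qed (auto simp: space_PiM)
  thus ?thesis by simp
qed

lemma Psi_borel: "Psi e \<in> borel_measurable PP"
proof -
  have "measurable PP (PiM UNIV (\<lambda>_::'g. borel :: bool measure)) = measurable PP borel"
    by (rule measurable_cong_sets[OF refl sets_PiM_equal_borel])
  thus ?thesis using Psi_meas by metis
qed

lemma kappa_Suc: "kappa (Suc n) = kappa n / real (card (Tr (Suc n)))"
  unfolding kappa_def by (simp add: prod.atMost_Suc)

lemma card_Tr_pos: "0 < card (Tr j)"
  using Tr_fin Tr_ne card_gt_0_iff by blast

lemma kappa_nonneg: "0 \<le> kappa n"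
  unfolding kappa_def by (intro prod_nonneg) auto

lemma kappa_anti_Suc: "kappa (Suc n) \<le> kappa n"
proof -
  have "1 \<le> real (card (Tr (Suc n)))" using card_Tr_pos[of "Suc n"] by linarith
  thus ?thesis unfolding kappa_Suc using kappa_nonneg[of n] by (simp add: divide_le_eq mult_le_cancel_left1 order_trans)
qed

lemma kappa_anti: "m \<le> n \<Longrightarrow> kappa n \<le> kappa m"
  using lift_Suc_antimono_le[of kappa] kappa_anti_Suc by blast

lemma kappa_0: "kappa 0 \<le> 1"
  unfolding kappa_def using card_Tr_pos[of 0] by simp

lemma kappa_nxt: "kappa (nxt k) \<le> kappa k / 2"
proof -
  obtain p where p: "nxt k = Suc p" "k \<le> p" using nxt(1)[of k] by (cases "nxt k") auto
  have "2 \<le> real (card (Tr (Suc p)))" using Tr_card2[OF nxt(2)[of k]] p(1) by simp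
  hence "kappa p / real (card (Tr (Suc p))) \<le> kappa p / 2"
    using kappa_nonneg[of p] by (intro divide_left_mono) auto
  hence "kappa (Suc p) \<le> kappa p / 2" unfolding kappa_Suc .
  thus ?thesis using p kappa_anti[OF p(2)] by simp
qed

lemma kappa_small: "\<exists>k. kappa k \<le> (1/2) ^ i"
proof (induction i)
  case 0 thus ?case using kappa_0 by auto
next
  case (Suc i)
  then obtain k where "kappa k \<le> (1/2) ^ i" by blast
  hence "kappa (nxt k) \<le> (1/2) ^ Suc i" using kappa_nxt[of k] by simp
  thus ?case by blast
qed

lemma odo_in: "d \<in> space PP \<Longrightarrow> h \<in> odo d k \<Longrightarrow> odo d k = lcoset h (\<Gamma> k)"
  unfolding odo_def using lcoset_eq_iff_mem[OF sg] by blast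

lemma null_h: "{d\<in>space PP. \<forall>k. h \<in> odo d k} \<in> null_sets PP"
proof -
  interpret prob_space PP by (rule prob_PP)
  have meas: "{d\<in>space PP. \<forall>k. h \<in> odo d k} \<in> sets PP" by measurable
  have le: "measure PP {d\<in>space PP. \<forall>k. h \<in> odo d k} \<le> kappa k" for k
  proof -
    have "{d\<in>space PP. \<forall>k. h \<in> odo d k} \<subseteq> {d\<in>space PP. odo d k = lcoset h (\<Gamma> k)}"
      using odo_in by blast
    hence "measure PP {d\<in>space PP. \<forall>k. h \<in> odo d k} \<le> measure PP {d\<in>space PP. odo d k = lcoset h (\<Gamma> k)}"
      using odo_fiber_sets by (intro finite_measure_mono) auto
    also have "\<dots> = kappa k" using odo_fiber_measure cosets_nonempty by blast
    finally show ?thesis .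
  qed
  have "measure PP {d\<in>space PP. \<forall>k. h \<in> odo d k} \<le> (1/2) ^ i" for i
    using le kappa_small[of i] by (meson order_trans)
  hence "measure PP {d\<in>space PP. \<forall>k. h \<in> odo d k} \<le> 0"
  proof -
    have "(\<lambda>n. (1/2::real) ^ n) \<longlonglongrightarrow> 0" by (rule LIMSEQ_realpow_zero) auto
    thus ?thesis using \<open>\<And>i. measure PP _ \<le> (1/2) ^ i\<close> by (intro LIMSEQ_le_const) auto
  qed
  hence "measure PP {d\<in>space PP. \<forall>k. h \<in> odo d k} = 0" by (simp add: measure_nonneg order_antisym)
  thus ?thesis using meas by (simp add: emeasure_eq_measure null_sets_def)
qed

lemma cov_null: "space PP - {d\<in>space PP. covered (odo d)} \<in> null_sets PP"
proof -
  have "space PP - {d\<in>space PP. covered (odo d)} = (\<Union>h. {d\<in>space PP. \<forall>k. h \<in> odo d k})"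
    unfolding covered_def by blast
  thus ?thesis using null_h by (simp add: null_sets_UN)
qed

lemma ex_cov: "\<exists>d\<in>space PP. covered (odo d)"
proof (rule ccontr)
  interpret prob_space PP by (rule prob_PP)
  assume "\<not> ?thesis"
  hence "space PP - {d\<in>space PP. covered (odo d)} = space PP" by blast
  hence "space PP \<in> null_sets PP" using cov_null by simp
  hence "emeasure PP (space PP) = 0" by (rule null_setsD1)
  thus False using emeasure_space_1 by simp
qed

definition SS :: "'g set \<Rightarrow> ('g \<Rightarrow> bool set) \<Rightarrow> ('g \<Rightarrow> 'g) \<Rightarrow> nat \<Rightarrow> 'g set set" where
  "SS J A f m = {c \<in> cosets (\<Gamma> m). \<exists>a. c = lcoset a (\<Gamma> m) \<and> (\<forall>j\<in>J. f j \<notin> c \<and> bb (Lev a (f j)) \<in> A j)}"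

lemma cyl_lim:
  assumes J: "finite J"
  shows "(\<lambda>m. real (card (SS J A f m)) * kappa m) \<longlonglongrightarrow> measure PP {d\<in>space PP. \<forall>j\<in>J. Psi e d (f j) \<in> A j}"
proof -
  interpret prob_space PP by (rule prob_PP)
  define E where "E = {d\<in>space PP. \<forall>j\<in>J. Psi e d (f j) \<in> A j}"
  define Cv where "Cv = {d\<in>space PP. covered (odo d)}"
  define N0 where "N0 = space PP - Cv"
  define C where "C m = {d\<in>space PP. \<forall>j\<in>J. f j \<notin> odo d m}" for m
  define B where "B m = E \<inter> Cv \<inter> C m" for m
  have predPsi[measurable]: "Measurable.pred PP (\<lambda>d. Psi e d (f j) \<in> A j)" for j
    by (rule measurable_compose[OF Psi_comp_meas measurable_count_space])
  have E: "E \<in> sets PP" unfolding E_def using J by (intro sets.sets_Collect_finite_All) auto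
  have Cv: "Cv \<in> sets PP" unfolding Cv_def by measurable
  have N0: "N0 \<in> null_sets PP" unfolding N0_def Cv_def by (rule cov_null)
  have Cm: "C m \<in> sets PP" for m unfolding C_def using J by (intro sets.sets_Collect_finite_All) auto
  have Bm: "B m \<in> sets PP" for m unfolding B_def using E Cv Cm by blast
  have inc: "incseq B"
  proof (rule incseq_SucI)
    fix m
    have "C m \<subseteq> C (Suc m)" unfolding C_def using od_mono[OF odo_od, of _ m "Suc m"] by auto
    thus "B m \<subseteq> B (Suc m)" unfolding B_def by blast
  qed
  have UB: "(\<Union>m. B m) = E \<inter> Cv"
  proof
    show "(\<Union>m. B m) \<subseteq> E \<inter> Cv" unfolding B_def by blast
    show "E \<inter> Cv \<subseteq> (\<Union>m. B m)"
    proof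
      fix d assume d: "d \<in> E \<inter> Cv"
      hence dsp: "d \<in> space PP" and cov: "covered (odo d)" unfolding Cv_def by auto
      have "\<forall>j\<in>J. \<exists>k. f j \<notin> odo d k" using cov covered_def by blast
      then obtain kf where kf: "\<And>j. j \<in> J \<Longrightarrow> f j \<notin> odo d (kf j)" by metis
      define m where "m = Max (insert 0 (kf ` J))"
      have "f j \<notin> odo d m" if "j \<in> J" for j
      proof -
        have "kf j \<le> m" unfolding m_def using J that by (intro Max_ge) auto
        thus ?thesis using od_mono[OF odo_od[OF dsp]] kf[OF that] by blast
      qed
      hence "d \<in> C m" unfolding C_def using dsp by blast
      thus "d \<in> (\<Union>m. B m)" using d unfolding B_def by blast
    qed
  qed
  have lim: "(\<lambda>m. measure PP (B m)) \<longlonglongrightarrow> measure PP (E \<inter> Cv)"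
    using finite_Lim_measure_incseq[OF _ inc] Bm UB by (metis image_subset_iff)
  have "E \<inter> Cv = E - N0" unfolding N0_def E_def by blast
  hence mE: "measure PP (E \<inter> Cv) = measure PP E" using measure_Diff_null_set[OF E N0] by simp
  have mB: "measure PP (B m) = real (card (SS J A f m)) * kappa m" for m
  proof -
    define D where "D = {d\<in>space PP. odo d m \<in> SS J A f m}"
    have pw: "d \<in> E \<inter> C m \<longleftrightarrow> odo d m \<in> SS J A f m" if d: "d \<in> Cv" for d
    proof -
      have dsp: "d \<in> space PP" and cov: "covered (odo d)" using d unfolding Cv_def by auto
      have y: "odo d \<in> Od" by (rule odo_od[OF dsp])
      have Ps: "Psi e d = Phi (odo d)" unfolding Psi_def using cov by simp
      have ym: "odo d m = lcoset (psum d m) (\<Gamma> m)" unfolding odo_def ..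
      show ?thesis
      proof
        assume h: "d \<in> E \<inter> C m"
        have "\<forall>j\<in>J. f j \<notin> odo d m \<and> bb (Lev (psum d m) (f j)) \<in> A j"
        proof
          fix j assume j: "j \<in> J"
          have nm: "f j \<notin> odo d m" using h j unfolding C_def by blast
          have "Phi (odo d) \<in> Z m (psum d m)" by (rule Phi_Z[OF y ym])
          hence "Phi (odo d) (f j) = bb (Lev (psum d m) (f j))" using nm ym unfolding Z_def by blast
          moreover have "Psi e d (f j) \<in> A j" using h j unfolding E_def by blast
          ultimately show "f j \<notin> odo d m \<and> bb (Lev (psum d m) (f j)) \<in> A j" using nm Ps by simp
        qed
        hence all: "\<forall>j\<in>J. f j \<notin> odo d m \<and> bb (Lev (psum d m) (f j)) \<in> A j" .
        have c1: "odo d m \<in> cosets (\<Gamma> m)" using ym cosets_nonempty by simp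
        show "odo d m \<in> SS J A f m" unfolding SS_def mem_Collect_eq
          by (rule conjI[OF c1], rule exI[of _ "psum d m"], rule conjI[OF ym all])
      next
        assume "odo d m \<in> SS J A f m"
        then obtain a where a: "odo d m = lcoset a (\<Gamma> m)" "\<forall>j\<in>J. f j \<notin> odo d m \<and> bb (Lev a (f j)) \<in> A j"
          unfolding SS_def by blast
        have "Phi (odo d) \<in> Z m a" by (rule Phi_Z[OF y a(1)])
        hence "\<forall>j\<in>J. Psi e d (f j) \<in> A j" using a Ps unfolding Z_def by auto
        moreover have "\<forall>j\<in>J. f j \<notin> odo d m" using a by blast
        ultimately show "d \<in> E \<inter> C m" unfolding E_def C_def using dsp by blast
      qed
    qed
    have "B m = D \<inter> Cv" unfolding B_def D_def using pw Cv_def by blast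
    also have "\<dots> = D - N0" unfolding D_def N0_def by blast
    finally have "measure PP (B m) = measure PP (D - N0)" by simp
    have SSfin: "finite (SS J A f m)" unfolding SS_def using fin_cosets by simp
    have Dun: "D = (\<Union>c\<in>SS J A f m. {d\<in>space PP. odo d m = c})" unfolding D_def by blast
    have Dsets: "D \<in> sets PP" unfolding Dun using SSfin odo_fiber_sets by blast
    have "measure PP D = (\<Sum>c\<in>SS J A f m. measure PP {d\<in>space PP. odo d m = c})"
      unfolding Dun
      by (rule finite_measure_finite_Union[OF SSfin]) (auto simp: odo_fiber_sets disjoint_family_on_def)
    also have "\<dots> = (\<Sum>c\<in>SS J A f m. kappa m)"
      by (intro sum.cong refl odo_fiber_measure) (simp add: SS_def)
    also have "\<dots> = real (card (SS J A f m)) * kappa m" by simp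
    finally show ?thesis using \<open>measure PP (B m) = measure PP (D - N0)\<close> measure_Diff_null_set[OF Dsets N0] by simp
  qed
  have "(\<lambda>m. real (card (SS J A f m)) * kappa m) \<longlonglongrightarrow> measure PP E" using lim unfolding mB mE .
  thus ?thesis unfolding E_def .
qed

lemma SS_card_shift: "card (SS J A (\<lambda>j. - g + j) m) = card (SS J A (\<lambda>j. j) m)"
proof (rule bij_betw_same_card)
  show "bij_betw (\<lambda>c. (+) g ` c) (SS J A (\<lambda>j. - g + j) m) (SS J A (\<lambda>j. j) m)"
  proof (rule bij_betw_byWitness[where f'="\<lambda>c. (+) (- g) ` c"])
    show "\<forall>c\<in>SS J A (\<lambda>j. - g + j) m. ((+) (- g)) ` (((+) g) ` c) = c"
      by (simp add: image_image add.assoc[symmetric])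
    show "\<forall>c\<in>SS J A (\<lambda>j. j) m. ((+) g) ` (((+) (- g)) ` c) = c"
      by (simp add: image_image add.assoc[symmetric])
    show "(\<lambda>c. (+) g ` c) ` SS J A (\<lambda>j. - g + j) m \<subseteq> SS J A (\<lambda>j. j) m"
    proof
      fix c' assume "c' \<in> (\<lambda>c. (+) g ` c) ` SS J A (\<lambda>j. - g + j) m"
      then obtain c a where c: "c' = (+) g ` c" "c = lcoset a (\<Gamma> m)"
        "\<forall>j\<in>J. - g + j \<notin> c \<and> bb (Lev a (- g + j)) \<in> A j" unfolding SS_def by blast
      have c'e: "c' = lcoset (g + a) (\<Gamma> m)" using c image_lcoset by metis
      have "\<forall>j\<in>J. j \<notin> c' \<and> bb (Lev (g + a) j) \<in> A j"
        using c(3) unfolding c'e c(2) lcoset_shift_mem Lev_shift by blast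
      thus "c' \<in> SS J A (\<lambda>j. j) m" unfolding SS_def mem_Collect_eq
        by (intro conjI exI[of _ "g + a"]) (simp_all add: c'e cosets_nonempty)
    qed
    show "(\<lambda>c. (+) (- g) ` c) ` SS J A (\<lambda>j. j) m \<subseteq> SS J A (\<lambda>j. - g + j) m"
    proof
      fix c' assume "c' \<in> (\<lambda>c. (+) (- g) ` c) ` SS J A (\<lambda>j. j) m"
      then obtain c a where c: "c' = (+) (- g) ` c" "c = lcoset a (\<Gamma> m)"
        "\<forall>j\<in>J. j \<notin> c \<and> bb (Lev a j) \<in> A j" unfolding SS_def by blast
      have c'e: "c' = lcoset (- g + a) (\<Gamma> m)" using c image_lcoset by metis
      have "\<forall>j\<in>J. - g + j \<notin> c' \<and> bb (Lev (- g + a) (- g + j)) \<in> A j"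
        using c(3) unfolding c'e c(2) lcoset_shift_mem Lev_shift by (simp add: add.assoc[symmetric])
      thus "c' \<in> SS J A (\<lambda>j. - g + j) m" unfolding SS_def mem_Collect_eq
        by (intro conjI exI[of _ "- g + a"]) (simp_all add: c'e cosets_nonempty)
    qed
  qed
qed

lemma cyl_shift_eq:
  assumes "finite J"
  shows "measure PP {d\<in>space PP. \<forall>j\<in>J. Psi e d (- g + j) \<in> A j} = measure PP {d\<in>space PP. \<forall>j\<in>J. Psi e d j \<in> A j}"
  using LIMSEQ_unique[OF cyl_lim[OF assms, of A "\<lambda>j. - g + j" e]] cyl_lim[OF assms, of A "\<lambda>j. j" e]
  unfolding SS_card_shift by blast

end

lemma pred_comp_eq[measurable]:
  "Measurable.pred (PiM UNIV (\<lambda>_::'g. borel :: bool measure)) (\<lambda>x. x i = (v::bool))"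
proof -
  have "{x\<in>space (PiM UNIV (\<lambda>_::'g. borel :: bool measure)). x i \<in> {v}} \<in> sets (PiM UNIV (\<lambda>_::'g. borel :: bool measure))"
    by (rule sets_Collect_single') (auto simp: sets_borel_eq_count_space)
  thus ?thesis by (simp add: pred_def)
qed

context constr
begin

definition mu :: "('g \<Rightarrow> bool) measure" where
  "mu = distr PP (restrict_space borel XX) (Psi eta)"

lemma Psi_XX: "d \<in> space PP \<Longrightarrow> Psi eta d \<in> XX"
  unfolding Psi_def using Phi_XX[OF odo_od] eta_XX by auto

lemma Psi_meas_X: "Psi eta \<in> measurable PP (restrict_space borel XX)"
  by (rule measurable_restrict_space2) (auto simp: Psi_XX Psi_borel)

abbreviation PiMb :: "('g \<Rightarrow> bool) measure" where
  "PiMb \<equiv> PiM UNIV (\<lambda>_::'g. borel :: bool measure)"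

lemma sets_PiMb: "sets PiMb = sets (borel :: ('g \<Rightarrow> bool) measure)"
  by (rule sets_PiM_equal_borel)

lemma shiftPsi_meas: "(\<lambda>d. shift g (Psi eta d)) \<in> measurable PP PiMb"
proof -
  have "(\<lambda>\<omega> i. Psi eta \<omega> (- g + i)) \<in> measurable PP PiMb"
  proof (rule measurable_PiM_single')
    fix i :: 'g
    show "(\<lambda>\<omega>. Psi eta \<omega> (- g + i)) \<in> measurable PP borel"
      using Psi_comp_meas measurable_cong_sets[OF refl sets_borel_eq_count_space] by blast
  qed (auto simp: space_PiM)
  thus ?thesis unfolding shift_def by simp
qed

lemma prod_emb_eq: "prod_emb UNIV (\<lambda>_::'g. borel :: bool measure) J (PiE J A) = {x. \<forall>j\<in>J. x j \<in> A j}"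
  unfolding prod_emb_def by (auto simp: PiE_def Pi_def restrict_def extensional_def)

lemma distr_eq: "distr PP PiMb (\<lambda>d. shift g (Psi eta d)) = distr PP PiMb (Psi eta)"
proof (rule measure_eqI_PiM_infinite)
  show "sets (distr PP PiMb (\<lambda>d. shift g (Psi eta d))) = sets PiMb" by simp
  show "sets (distr PP PiMb (Psi eta)) = sets PiMb" by simp
  show "finite_measure (distr PP PiMb (\<lambda>d. shift g (Psi eta d)))"
  proof -
    interpret D: prob_space "distr PP PiMb (\<lambda>d. shift g (Psi eta d))"
      by (rule prob_space.prob_space_distr[OF prob_PP shiftPsi_meas])
    show ?thesis by (rule finite_measureI) (simp add: D.emeasure_space_1)
  qed
  fix A :: "'g \<Rightarrow> bool set" and J :: "'g set"
  assume J: "finite J" "J \<subseteq> UNIV" "\<And>i. i \<in> J \<Longrightarrow> A i \<in> sets borel"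
  interpret prob_space PP by (rule prob_PP)
  have S: "prod_emb UNIV (\<lambda>_. borel) J (PiE J A) \<in> sets PiMb" using J by (intro sets_PiM_I) auto
  have e1: "emeasure (distr PP PiMb (\<lambda>d. shift g (Psi eta d))) (prod_emb UNIV (\<lambda>_. borel) J (PiE J A))
     = emeasure PP {d\<in>space PP. \<forall>j\<in>J. Psi eta d (- g + j) \<in> A j}"
    by (subst emeasure_distr[OF shiftPsi_meas S]) (auto simp: prod_emb_eq shift_def intro!: arg_cong[where f="emeasure PP"])
  have e2: "emeasure (distr PP PiMb (Psi eta)) (prod_emb UNIV (\<lambda>_. borel) J (PiE J A))
     = emeasure PP {d\<in>space PP. \<forall>j\<in>J. Psi eta d j \<in> A j}"
    by (subst emeasure_distr[OF Psi_meas S]) (auto simp: prod_emb_eq intro!: arg_cong[where f="emeasure PP"])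
  show "emeasure (distr PP PiMb (\<lambda>d. shift g (Psi eta d))) (prod_emb UNIV (\<lambda>_. borel) J (PiE J A)) =
        emeasure (distr PP PiMb (Psi eta)) (prod_emb UNIV (\<lambda>_. borel) J (PiE J A))"
    unfolding e1 e2 emeasure_eq_measure using cyl_shift_eq[OF J(1)] by simp
qed

lemma shift_inv:
  assumes B: "B \<in> sets (borel :: ('g \<Rightarrow> bool) measure)"
  shows "emeasure PP {d\<in>space PP. shift g (Psi eta d) \<in> B} = emeasure PP {d\<in>space PP. Psi eta d \<in> B}"
proof -
  have BP: "B \<in> sets PiMb" using B sets_PiMb by simp
  have "emeasure (distr PP PiMb (\<lambda>d. shift g (Psi eta d))) B = emeasure (distr PP PiMb (Psi eta)) B"
    using distr_eq by simp
  thus ?thesis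
    using emeasure_distr[OF shiftPsi_meas BP] emeasure_distr[OF Psi_meas BP]
    by (simp add: vimage_def Int_def conj_commute)
qed

lemma TT_sets: "{x. \<forall>h. \<exists>n. \<exists>\<alpha>::bool. \<forall>\<gamma>\<in>\<Gamma> n. x (\<gamma> + h) = \<alpha>} \<in> sets (borel :: ('g \<Rightarrow> bool) measure)"
proof -
  have "Measurable.pred PiMb (\<lambda>x. \<forall>h. \<exists>n. \<exists>\<alpha>::bool. \<forall>\<gamma>\<in>\<Gamma> n. x (\<gamma> + h) = \<alpha>)"
    by measurable
  hence "{x\<in>space PiMb. \<forall>h. \<exists>n. \<exists>\<alpha>::bool. \<forall>\<gamma>\<in>\<Gamma> n. x (\<gamma> + h) = \<alpha>} \<in> sets PiMb"
    by (simp add: pred_def)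
  thus ?thesis using sets_PiMb by (simp add: space_PiM)
qed

lemma Psi_TT: assumes "d \<in> space PP" shows "\<forall>h. \<exists>n. \<exists>\<alpha>::bool. \<forall>\<gamma>\<in>\<Gamma> n. Psi eta d (\<gamma> + h) = \<alpha>"
proof (cases "covered (odo d)")
  case True
  hence "\<forall>h. \<exists>k. h \<in> Per_val (Phi (odo d)) (\<Gamma> k) (Phi (odo d) h)"
    using toeplitz_Phi odo_od[OF assms] by blast
  show ?thesis
  proof
    fix h
    obtain k where "\<forall>\<gamma>\<in>\<Gamma> k. Phi (odo d) (\<gamma> + h) = Phi (odo d) h"
      using \<open>\<forall>h. \<exists>k. _\<close> unfolding Per_val_def by blast
    hence "\<forall>\<gamma>\<in>\<Gamma> k. Psi eta d (\<gamma> + h) = Phi (odo d) h" unfolding Psi_def using True by simp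
    thus "\<exists>n \<alpha>. \<forall>\<gamma>\<in>\<Gamma> n. Psi eta d (\<gamma> + h) = \<alpha>" by blast
  qed
next
  case False
  hence "\<forall>h. \<exists>k. h \<in> Per_val (Phi ys) (\<Gamma> k) (Phi ys h)"
    using toeplitz_Phi ys_od ys_cov by blast
  show ?thesis
  proof
    fix h
    obtain k where "\<forall>\<gamma>\<in>\<Gamma> k. Phi ys (\<gamma> + h) = Phi ys h"
      using \<open>\<forall>h. \<exists>k. _\<close> unfolding Per_val_def by blast
    hence "\<forall>\<gamma>\<in>\<Gamma> k. Psi eta d (\<gamma> + h) = Phi ys h" unfolding Psi_def eta_def using False by simp
    thus "\<exists>n \<alpha>. \<forall>\<gamma>\<in>\<Gamma> n. Psi eta d (\<gamma> + h) = \<alpha>" by blast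
  qed
qed

lemma regular_XX: "regular_shift XX"
  unfolding regular_shift_def
proof (intro exI[of _ mu] conjI ballI allI)
  show "prob_space mu" unfolding mu_def by (rule prob_space.prob_space_distr[OF prob_PP Psi_meas_X])
  show smu: "sets mu = sets (restrict_space borel XX)" unfolding mu_def by simp
  fix g A assume A: "A \<in> sets mu"
  have "A \<in> (\<inter>) XX ` sets borel" using A smu sets_restrict_space by metis
  then obtain B where B: "B \<in> sets borel" "A = XX \<inter> B" by blast
  have B': "shift g -` B \<in> sets borel"
    using measurable_sets[OF borel_measurable_continuous_onI[OF continuous_shift] B(1)] by simp
  have eqA: "shift g -` A \<inter> XX = XX \<inter> shift g -` B" using B(2) XX_shift by auto
  have A'sets: "XX \<inter> shift g -` B \<in> sets (restrict_space borel XX)"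
    using B' by (auto simp: sets_restrict_space)
  have Asets: "A \<in> sets (restrict_space borel XX)" using A smu by simp
  have "emeasure mu (shift g -` A \<inter> XX) = emeasure PP (Psi eta -` (XX \<inter> shift g -` B) \<inter> space PP)"
    unfolding eqA mu_def by (rule emeasure_distr[OF Psi_meas_X A'sets])
  also have "\<dots> = emeasure PP {d\<in>space PP. shift g (Psi eta d) \<in> B}"
    using Psi_XX by (intro arg_cong[where f="emeasure PP"]) auto
  also have "\<dots> = emeasure PP {d\<in>space PP. Psi eta d \<in> B}" by (rule shift_inv[OF B(1)])
  also have "\<dots> = emeasure PP (Psi eta -` A \<inter> space PP)"
    using Psi_XX B(2) by (intro arg_cong[where f="emeasure PP"]) auto
  also have "\<dots> = emeasure mu A"
    unfolding mu_def by (rule emeasure_distr[OF Psi_meas_X Asets, symmetric])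
  finally show "emeasure mu (shift g -` A \<inter> XX) = emeasure mu A" .
next
  define TT where "TT = {x. \<forall>h. \<exists>n. \<exists>\<alpha>::bool. \<forall>\<gamma>\<in>\<Gamma> n. x (\<gamma> + h) = \<alpha>}"
  have smu: "sets mu = sets (restrict_space borel XX)" unfolding mu_def by simp
  have "space mu = space (restrict_space borel XX)" unfolding mu_def by (rule space_distr)
  also have "\<dots> = XX \<inter> space borel" by (rule space_restrict_space)
  also have "\<dots> = XX" by simp
  finally have spmu: "space mu = XX" .
  have "TT \<in> sets borel" unfolding TT_def by (rule TT_sets)
  hence "space borel - TT \<in> sets borel" by (rule sets.compl_sets)
  hence cT: "- TT \<in> sets borel" by (simp add: Compl_eq_Diff_UNIV)
  have Nsets: "XX \<inter> - TT \<in> sets mu"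
    unfolding smu sets_restrict_space by (rule image_eqI[OF refl cT])
  have "emeasure mu (XX \<inter> - TT) = emeasure PP (Psi eta -` (XX \<inter> - TT) \<inter> space PP)"
    unfolding mu_def by (rule emeasure_distr[OF Psi_meas_X]) (use Nsets smu in simp)
  also have "Psi eta -` (XX \<inter> - TT) \<inter> space PP = {}" using Psi_TT unfolding TT_def by auto
  finally have "XX \<inter> - TT \<in> null_sets mu" using Nsets by (simp add: null_sets_def)
  moreover have "{x\<in>space mu. \<not> toeplitz_array x} \<subseteq> XX \<inter> - TT"
  proof
    fix x assume x: "x \<in> {x\<in>space mu. \<not> toeplitz_array x}"
    have "x \<notin> TT"
    proof
      assume "x \<in> TT"
      hence "\<forall>h. \<exists>n. h \<in> Per x (\<Gamma> n)" unfolding TT_def Per_def Per_val_def by blast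
      hence "toeplitz_array x" unfolding toeplitz_array_def using fidx by blast
      thus False using x by simp
    qed
    thus "x \<in> XX \<inter> - TT" using x spmu by auto
  qed
  ultimately show "AE x in mu. toeplitz_array x" by (rule AE_I')
qed

end

lemma (in inf_setting) main_inf:
  "\<exists>X :: ('g \<Rightarrow> bool) set. toeplitz_subshift X \<and> free_shift X \<and> regular_shift X \<and> almost_1_1_ext_odometer X \<Gamma>"
proof -
  obtain d where d: "d \<in> space PP" "covered (odo d)" using ex_cov by blast
  interpret C: constr \<Gamma> "odo d"
    by unfold_locales (use odo_od[OF d(1)] d(2) in auto)
  show ?thesis using C.toeplitz_XX C.free_XX C.regular_XX C.almost_XX by blast
qed

lemma closed_singleton_fun: "closed {x :: 'g \<Rightarrow> bool}"
proof -
  have "{x} = (\<Inter>h. {f::'g\<Rightarrow>bool. f h = x h})" by auto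
  moreover have "closed (\<Inter>h. {f::'g\<Rightarrow>bool. f h = x h})" by (intro closed_INT ballI closed_eval)
  ultimately show ?thesis by simp
qed

lemma closed_finite_fun: "finite (F :: ('g \<Rightarrow> bool) set) \<Longrightarrow> closed F"
proof -
  assume F: "finite F"
  have "F = (\<Union>x\<in>F. {x})" by simp
  moreover have "closed (\<Union>x\<in>F. {x})" using F by (intro closed_UN ballI closed_singleton_fun)
  ultimately show ?thesis by simp
qed

lemma openin_finite_fun: assumes "finite (X :: ('g \<Rightarrow> bool) set)" "S \<subseteq> X" shows "openin (top_of_set X) S"
proof -
  have "closed (X - S)" using assms by (intro closed_finite_fun) auto
  hence "open (- (X - S))" by (rule open_Compl)
  moreover have "S = X \<inter> - (X - S)" using assms by auto
  ultimately show ?thesis by (metis openin_open_Int)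
qed

lemma cont_discrete_fin:
  assumes "f \<in> topspace T \<rightarrow> U" "\<And>u. u \<in> U \<Longrightarrow> openin T {x\<in>topspace T. f x = u}"
  shows "continuous_map T (discrete_topology U) f"
  unfolding continuous_map_def
proof (intro conjI allI impI)
  show "f \<in> topspace T \<rightarrow> topspace (discrete_topology U)" using assms(1) by simp
  fix V assume "openin (discrete_topology U) V"
  hence V: "V \<subseteq> U" by simp
  have "{x \<in> topspace T. f x \<in> V} = (\<Union>u\<in>V. {x\<in>topspace T. f x = u})" by blast
  moreover have "openin T (\<Union>u\<in>V. {x\<in>topspace T. f x = u})"
    using V assms(2) by (intro openin_Union) blast
  ultimately show "openin T {x \<in> topspace T. f x \<in> V}" by simp
qed

locale fin_setting = setting \<Gamma> for \<Gamma> :: "nat \<Rightarrow> 'g::{group_add,countable} set" +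
  assumes finG: "finite (UNIV :: 'g set)"
begin

definition dl :: "'g \<Rightarrow> 'g \<Rightarrow> bool" where "dl a = (\<lambda>h. h = a)"

lemma dl_inj: "dl a = dl b \<Longrightarrow> a = b"
  unfolding dl_def by metis

lemma shift_dl: "shift g (dl a) = dl (g + a)"
proof
  fix h
  have "(- g + h = a) = (h = g + a)"
  proof
    assume "- g + h = a" hence "g + (- g + h) = g + a" by simp
    thus "h = g + a" by (simp add: add.assoc[symmetric])
  next
    assume "h = g + a" thus "- g + h = a" by (simp add: add.assoc[symmetric])
  qed
  thus "shift g (dl a) h = dl (g + a) h" unfolding shift_def dl_def by simp
qed

definition XF :: "('g \<Rightarrow> bool) set" where "XF = range dl"

lemma XF_fin: "finite XF" unfolding XF_def using finG by simp

lemma XF_orbit: "XF = orbit_closure (dl 0)"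
proof -
  have "range (\<lambda>g. shift g (dl 0)) = XF" unfolding XF_def shift_dl by simp
  thus ?thesis unfolding orbit_closure_def using closed_finite_fun[OF XF_fin] closure_closed by metis
qed

lemma fi0: "finite_index {0::'g}"
  unfolding finite_index_def subgrp_def cosets_def using finG by simp

lemma toeplitz_any: "toeplitz_array (x :: 'g \<Rightarrow> bool)"
  unfolding toeplitz_array_def Per_def Per_val_def using fi0 by blast

lemma N0: "\<exists>N. \<Gamma> N = {0}"
proof -
  have "\<forall>g\<in>UNIV - {0}. \<exists>n. g \<notin> \<Gamma> n" using inter by blast
  then obtain nf where nf: "\<And>g. g \<noteq> 0 \<Longrightarrow> g \<notin> \<Gamma> (nf g)" by (metis Diff_iff UNIV_I singletonD)
  define N where "N = Max (nf ` UNIV)"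
  have "\<Gamma> N \<subseteq> {0}"
  proof
    fix g assume g: "g \<in> \<Gamma> N"
    show "g \<in> {0}"
    proof (rule ccontr)
      assume "g \<notin> {0}"
      hence "g \<notin> \<Gamma> (nf g)" using nf by simp
      moreover have "nf g \<le> N" unfolding N_def using finG by simp
      ultimately show False using anti g by blast
    qed
  qed
  thus ?thesis using subgrpD(1)[OF sg, of N] by blast
qed

definition piF :: "('g \<Rightarrow> bool) \<Rightarrow> nat \<Rightarrow> 'g set" where
  "piF x = (\<lambda>n. lcoset (THE a. x = dl a) (\<Gamma> n))"

lemma piF_dl: "piF (dl a) = (\<lambda>n. lcoset a (\<Gamma> n))"
proof -
  have "(THE b. dl a = dl b) = a" by (rule the_equality) (auto dest: dl_inj)
  thus ?thesis unfolding piF_def by simp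
qed

lemma dl_od: "(\<lambda>n. lcoset a (\<Gamma> n)) \<in> Od"
  unfolding odometer_def
proof (intro CollectI conjI allI impI)
  fix n show "lcoset a (\<Gamma> n) \<in> cosets (\<Gamma> n)" by (rule cosets_nonempty)
next
  fix n g assume "lcoset a (\<Gamma> (Suc n)) = lcoset g (\<Gamma> (Suc n))"
  thus "lcoset a (\<Gamma> n) = lcoset g (\<Gamma> n)" by (rule coset_coarsen[rotated]) simp
qed

lemma lcoset_0: "lcoset a {0::'g} = {a}" unfolding lcoset_def by simp

lemma od_is_dl: assumes y: "y \<in> Od" shows "\<exists>a. y = (\<lambda>n. lcoset a (\<Gamma> n))"
proof -
  obtain N where N: "\<Gamma> N = {0}" using N0 by blast
  obtain a where a: "y N = lcoset a (\<Gamma> N)" using od_level[OF y] by blast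
  have "y n = lcoset a (\<Gamma> n)" for n
  proof (cases "n \<le> N")
    case True thus ?thesis using od_down[OF y a] by blast
  next
    case False
    obtain b where b: "y n = lcoset b (\<Gamma> n)" using od_level[OF y] by blast
    have "y N = lcoset b (\<Gamma> N)" using od_down[OF y b] False by simp
    hence "{b} = {a}" using a N lcoset_0 by simp
    thus ?thesis using b by simp
  qed
  thus ?thesis by blast
qed

lemma regular_XF: "regular_shift XF"
  unfolding regular_shift_def
proof (intro exI[of _ "uniform_count_measure XF"] conjI ballI allI)
  have ne: "XF \<noteq> {}" unfolding XF_def by simp
  show "prob_space (uniform_count_measure XF)" by (rule prob_space_uniform_count_measure[OF XF_fin ne])
  show "sets (uniform_count_measure XF) = sets (restrict_space borel XF)"
  proof
    show "sets (uniform_count_measure XF) \<subseteq> sets (restrict_space borel XF)"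
    proof
      fix S assume "S \<in> sets (uniform_count_measure XF)"
      hence S: "S \<subseteq> XF" by (simp add: sets_uniform_count_measure)
      hence "closed S" using XF_fin by (intro closed_finite_fun) (auto intro: finite_subset)
      hence "S \<in> sets borel" by (rule borel_closed)
      moreover have "S = XF \<inter> S" using S by auto
      ultimately show "S \<in> sets (restrict_space borel XF)" unfolding sets_restrict_space by blast
    qed
    show "sets (restrict_space borel XF) \<subseteq> sets (uniform_count_measure XF)"
      unfolding sets_restrict_space by (auto simp: sets_uniform_count_measure)
  qed
  fix g A assume A: "A \<in> sets (uniform_count_measure XF)"
  hence AX: "A \<subseteq> XF" by (simp add: sets_uniform_count_measure)
  have sXF: "shift g x \<in> XF" if xX: "x \<in> XF" for g x
  proof -
    obtain a where "x = dl a" using xX unfolding XF_def by (rule rangeE)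
    thus ?thesis unfolding XF_def using shift_dl by simp
  qed
  have bij: "bij_betw (shift g) (shift g -` A \<inter> XF) A"
  proof (rule bij_betw_byWitness[where f'="shift (- g)"])
    have inv: "shift (- g) (shift g x) = x" "shift g (shift (- g) x) = x" for x :: "'g \<Rightarrow> bool"
      unfolding shift_def by (simp_all add: add.assoc[symmetric])
    show "\<forall>a\<in>shift g -` A \<inter> XF. shift (- g) (shift g a) = a" using inv by simp
    show "\<forall>a'\<in>A. shift g (shift (- g) a') = a'" using inv by simp
    show "shift g ` (shift g -` A \<inter> XF) \<subseteq> A" by auto
    show "shift (- g) ` A \<subseteq> shift g -` A \<inter> XF" using inv AX sXF by auto
  qed
  have c: "card (shift g -` A \<inter> XF) = card A" using bij_betw_same_card[OF bij] .
  show "emeasure (uniform_count_measure XF) (shift g -` A \<inter> XF) = emeasure (uniform_count_measure XF) A"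
    using c AX XF_fin by (simp add: emeasure_uniform_count_measure)
next
  show "AE x in uniform_count_measure XF. toeplitz_array x" by (rule AE_I2) (rule toeplitz_any)
qed

lemma main_fin:
  "\<exists>X :: ('g \<Rightarrow> bool) set. toeplitz_subshift X \<and> free_shift X \<and> regular_shift X \<and> almost_1_1_ext_odometer X \<Gamma>"
proof (intro exI[of _ XF] conjI)
  show "toeplitz_subshift XF" unfolding toeplitz_subshift_def using XF_orbit toeplitz_any by blast
  show "free_shift XF" unfolding free_shift_def XF_def
  proof (intro ballI allI impI)
    fix x g assume "x \<in> range dl" "shift g x = x"
    then obtain a where a: "x = dl a" "dl (g + a) = dl a" using shift_dl by auto
    hence "g + a = a" using dl_inj by blast
    hence "g + a + - a = a + - a" by simp
    thus "g = 0" by (simp add: add.assoc)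
  qed
  show "regular_shift XF" by (rule regular_XF)
  show "almost_1_1_ext_odometer XF \<Gamma>"
    unfolding almost_1_1_ext_odometer_def
  proof (intro exI[of _ piF] conjI)
    show "continuous_map (top_of_set XF) (odometer_top \<Gamma>) piF"
      unfolding odometer_top_def continuous_map_in_subtopology
    proof (intro conjI)
      show "piF \<in> topspace (top_of_set XF) \<rightarrow> Od"
      proof
        fix x assume "x \<in> topspace (top_of_set XF)"
        then obtain a where "x = dl a" unfolding XF_def by auto
        thus "piF x \<in> Od" using piF_dl dl_od by simp
      qed
      show "continuous_map (top_of_set XF) (product_topology (\<lambda>n. discrete_topology (cosets (\<Gamma> n))) UNIV) piF"
        unfolding continuous_map_componentwise_UNIV
      proof
        fix n
        show "continuous_map (top_of_set XF) (discrete_topology (cosets (\<Gamma> n))) (\<lambda>x. piF x n)"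
        proof (rule cont_discrete_fin)
          show "(\<lambda>x. piF x n) \<in> topspace (top_of_set XF) \<rightarrow> cosets (\<Gamma> n)"
          proof
            fix x assume "x \<in> topspace (top_of_set XF)"
            then obtain a where "x = dl a" unfolding XF_def by auto
            thus "piF x n \<in> cosets (\<Gamma> n)" using piF_dl cosets_nonempty by simp
          qed
          fix c
          show "openin (top_of_set XF) {x \<in> topspace (top_of_set XF). piF x n = c}"
            by (rule openin_finite_fun[OF XF_fin]) auto
        qed
      qed
    qed
    show "piF ` XF = Od"
    proof
      show "piF ` XF \<subseteq> Od" unfolding XF_def using piF_dl dl_od by auto
      show "Od \<subseteq> piF ` XF"
      proof
        fix y assume "y \<in> Od"
        then obtain a where "y = (\<lambda>n. lcoset a (\<Gamma> n))" using od_is_dl by blast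
        thus "y \<in> piF ` XF" unfolding XF_def using piF_dl by (metis rangeI image_eqI)
      qed
    qed
    show "\<forall>g. \<forall>x\<in>XF. piF (shift g x) = odometer_act g (piF x)"
      unfolding XF_def odometer_act_def by (auto simp: shift_dl piF_dl image_lcoset)
    show "\<exists>y\<in>Od. \<exists>!x. x \<in> XF \<and> piF x = y"
    proof (intro bexI[of _ "piF (dl 0)"] ex1I[of _ "dl 0"])
      show "piF (dl 0) \<in> Od" using piF_dl dl_od by simp
      show "dl 0 \<in> XF \<and> piF (dl 0) = piF (dl 0)" unfolding XF_def by simp
      fix x assume x: "x \<in> XF \<and> piF x = piF (dl 0)"
      then obtain a where a: "x = dl a" unfolding XF_def by auto
      obtain N where N: "\<Gamma> N = {0}" using N0 by blast
      have "lcoset a (\<Gamma> N) = lcoset 0 (\<Gamma> N)" using x a piF_dl by metis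
      hence "a = 0" using N lcoset_0 by simp
      thus "x = dl 0" using a by simp
    qed
  qed
qed

end

theorem proposition3p8:
  fixes \<Gamma> :: "nat \<Rightarrow> 'g::{group_add,countable} set"
  assumes "residually_finite TYPE('g)"
    and "\<forall>n. normal_subgrp (\<Gamma> n) \<and> finite_index (\<Gamma> n)"
    and "\<forall>n. \<Gamma> (Suc n) \<subseteq> \<Gamma> n"
    and "(\<Inter>n. \<Gamma> n) = {0}"
  shows "\<exists>X :: ('g \<Rightarrow> bool) set. toeplitz_subshift X \<and> free_shift X \<and> regular_shift X \<and>
           almost_1_1_ext_odometer X \<Gamma>"
proof -
  interpret setting \<Gamma> using assms(2-4) by unfold_locales auto
  show ?thesis
  proof (cases "finite (UNIV :: 'g set)")
    case True
    interpret fin_setting \<Gamma> by unfold_locales (rule True)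
    show ?thesis by (rule main_fin)
  next
    case False
    interpret inf_setting \<Gamma> by unfold_locales (rule False)
    show ?thesis by (rule main_inf)
  qed
qed

end
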